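(* Let $G=(V,E)$ be a connected undirected graph with $V=\{1,\dots,N\}$, let $K\ge2$, $d\ge0$ an integer, $\gamma\in(0,1]$, and let every agent run Exp3-Coop (defined in the context) with delay $d$ and learning rate $\eta=\gamma/(Ke(d+1))$. Then for every $T\ge1$ and every fixed (oblivious) sequence of loss vectors $\boldsymbol\ell_1,\dots,\boldsymbol\ell_T\in[0,1]^K$, $$R_T^{\mathrm{coop}}\le 2d+\frac{Ke(d+1)\ln K}{\gamma}+\gamma\left(\frac{\alpha(G_{\le d})}{2(1-e^{-1})(d+1)N}+\frac{3}{Ke}\right)T.$$
   Context: Setting. $A=\{1,\dots,K\}$ is the action set; an adversary fixes in advance loss vectors $\boldsymbol\ell_t=(\ell_t(1),\dots,\ell_t(K))\in[0,1]^K$, $t\ge1$. For $v\in V$ and $s\ge0$, $N_{\le s}(v)$ is the set of nodes at shortest-path distance at most $s$ from $v$ in $G$ (so $v\in N_{\le s}(v)$). $G_{\le d}$ is the graph on $V$ with an edge between distinct $u,v$ iff their shortest-path distance in $G$ is at most $d$ ($G_{\le 0}$ has no edges), and $\alpha(G_{\le d})$ is its independence number (maximum size of a set of pairwise nonadjacent vertices). Exp3-Coop. Each agent $v\in V$ keeps weights $w_t(i,v)$, with $w_1(i,v)=1$. At round $t=1,2,\dots$: each agent $v$ computes $W_t(v)=\sum_{j\in A}w_t(j,v)$, $p_t(i,v)=w_t(i,v)/W_t(v)$, and draws $I_t(v)\in A$ from $\boldsymbol p_t(v)=(p_t(1,v),\dots,p_t(K,v))$, the draws of different agents being independent conditionally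 on the past; agent $v$ incurs loss $\ell_t(I_t(v))$. Then each agent updates $w_{t+1}(i,v)=p_t(i,v)\exp(-\eta\,\widehat\ell_t(i,v))$, where $$\widehat\ell_t(i,v)=\begin{cases}\dfrac{\ell_{t-d}(i)}{q_{d,t-d}(i,v)}B_{d,t-d}(i,v)&t>d,\\ 0&\text{otherwise},\end{cases}$$ $B_{d,s}(i,v)=\mathbb{1}\{\exists v'\in N_{\le d}(v): I_s(v')=i\}$ and $q_{d,s}(i,v)=1-\prod_{v'\in N_{\le d}(v)}(1-p_s(i,v'))$. (Operationally, this information reaches $v$ through messages forwarded along $G$ at one hop per round.) Average welfare regret: $$R_T^{\mathrm{coop}}=\frac1N\sum_{v\in V}\mathbb E\Bigl[\sum_{t=1}^T\ell_t(I_t(v))\Bigr]-\min_{i\in A}\sum_{t=1}^T\ell_t(i),$$ the expectation being over the agents' internal randomization. *)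

theory Defs
  imports Complex_Main "HOL-Library.FuncSet"
begin

text \<open>Graph G on V = {1..N} given by a symmetric irreflexive edge relation E.
  walk_le E s u v: there is a walk of length at most s from u to v,
  i.e. the shortest-path distance from u to v is at most s.\<close>

fun walk_le :: "(nat \<Rightarrow> nat \<Rightarrow> bool) \<Rightarrow> nat \<Rightarrow> nat \<Rightarrow> nat \<Rightarrow> bool" where
  "walk_le E 0 u v = (u = v)"
| "walk_le E (Suc k) u v = (walk_le E k u v \<or> (\<exists>w. walk_le E k u w \<and> E w v))"

definition connected_graph :: "(nat \<Rightarrow> nat \<Rightarrow> bool) \<Rightarrow> nat \<Rightarrow> bool" where
  "connected_graph E N = (\<forall>u\<in>{1..N}. \<forall>v\<in>{1..N}. \<exists>k. walk_le E k u v)"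

definition nbhd :: "(nat \<Rightarrow> nat \<Rightarrow> bool) \<Rightarrow> nat \<Rightarrow> nat \<Rightarrow> nat \<Rightarrow> nat set" where
  "nbhd E N s v = {u \<in> {1..N}. walk_le E s v u}"

definition indep_pow :: "(nat \<Rightarrow> nat \<Rightarrow> bool) \<Rightarrow> nat \<Rightarrow> nat \<Rightarrow> nat set \<Rightarrow> bool" where
  "indep_pow E N d S = (S \<subseteq> {1..N} \<and> (\<forall>u\<in>S. \<forall>w\<in>S. u \<noteq> w \<longrightarrow> \<not> walk_le E d u w))"

definition alpha_pow :: "(nat \<Rightarrow> nat \<Rightarrow> bool) \<Rightarrow> nat \<Rightarrow> nat \<Rightarrow> nat" where
  "alpha_pow E N d = Max (card ` {S. indep_pow E N d S})"

text \<open>A realised history h maps (s, v) to the action I_s(v).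
  coop_p E N K d \<eta> L h t i v = p_t(i,v) along history h (rounds t \<ge> 1; it depends only
  on h at rounds < t). Round 0 is a dummy.\<close>

fun coop_p :: "(nat \<Rightarrow> nat \<Rightarrow> bool) \<Rightarrow> nat \<Rightarrow> nat \<Rightarrow> nat \<Rightarrow> real \<Rightarrow> (nat \<Rightarrow> nat \<Rightarrow> real)
    \<Rightarrow> (nat \<times> nat \<Rightarrow> nat) \<Rightarrow> nat \<Rightarrow> nat \<Rightarrow> nat \<Rightarrow> real" where
  "coop_p E N K d \<eta> L h 0 = (\<lambda>i v. 1 / real K)"
| "coop_p E N K d \<eta> L h (Suc t) =
    (let pt = coop_p E N K d \<eta> L h t;
         pd = coop_p E N K d \<eta> L h (t - d);
         lhat = (\<lambda>i v. if d < t then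
                   L (t - d) i / (1 - (\<Prod>v'\<in>nbhd E N d v. (1 - pd i v')))
                   * (if \<exists>v'\<in>nbhd E N d v. h (t - d, v') = i then 1 else 0)
                 else 0)
     in if t = 0 then (\<lambda>i v. 1 / real K)
        else (\<lambda>i v. pt i v * exp (- \<eta> * lhat i v)
                    / (\<Sum>j\<in>{1..K}. pt j v * exp (- \<eta> * lhat j v))))"

text \<open>Probability of a full history of rounds 1..T (independent draws given the past).\<close>
definition coop_prob :: "(nat \<Rightarrow> nat \<Rightarrow> bool) \<Rightarrow> nat \<Rightarrow> nat \<Rightarrow> nat \<Rightarrow> real \<Rightarrow> (nat \<Rightarrow> nat \<Rightarrow> real)
    \<Rightarrow> nat \<Rightarrow> (nat \<times> nat \<Rightarrow> nat) \<Rightarrow> real" where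
  "coop_prob E N K d \<eta> L T h =
     (\<Prod>s\<in>{1..T}. \<Prod>v\<in>{1..N}. coop_p E N K d \<eta> L h s (h (s, v)) v)"

definition histories :: "nat \<Rightarrow> nat \<Rightarrow> nat \<Rightarrow> (nat \<times> nat \<Rightarrow> nat) set" where
  "histories N K T = ({1..T} \<times> {1..N}) \<rightarrow>\<^sub>E {1..K}"

definition coop_exp_loss :: "(nat \<Rightarrow> nat \<Rightarrow> bool) \<Rightarrow> nat \<Rightarrow> nat \<Rightarrow> nat \<Rightarrow> real \<Rightarrow> (nat \<Rightarrow> nat \<Rightarrow> real)
    \<Rightarrow> nat \<Rightarrow> nat \<Rightarrow> real" where
  "coop_exp_loss E N K d \<eta> L T v =
     (\<Sum>h\<in>histories N K T. coop_prob E N K d \<eta> L T h * (\<Sum>t=1..T. L t (h (t, v))))"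

definition coop_regret :: "(nat \<Rightarrow> nat \<Rightarrow> bool) \<Rightarrow> nat \<Rightarrow> nat \<Rightarrow> nat \<Rightarrow> real \<Rightarrow> (nat \<Rightarrow> nat \<Rightarrow> real)
    \<Rightarrow> nat \<Rightarrow> real" where
  "coop_regret E N K d \<eta> L T =
     (\<Sum>v\<in>{1..N}. coop_exp_loss E N K d \<eta> L T v) / real N
     - Min ((\<lambda>i. \<Sum>t=1..T. L t i) ` {1..K})"

end

theory Submission
  imports Defs "HOL-Analysis.Convex"
begin

lemma walk_refl: "walk_le E k u u"
  by (induction k) auto

lemma exp_quad: assumes "(y::real) \<ge> 0" shows "exp (- y) \<le> 1 - y + y^2 / 2"
proof -
  let ?f = "\<lambda>x::real. 1 - x + x^2 / 2 - exp (- x)"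
  have "?f 0 \<le> ?f y"
  proof (rule DERIV_nonneg_imp_nondecreasing[OF assms])
    fix x :: real assume "0 \<le> x" "x \<le> y"
    have "DERIV ?f x :> (- 1 + x + exp (- x))"
      by (auto intro!: derivative_eq_intros simp: power2_eq_square)
    moreover have "- 1 + x + exp (- x) \<ge> 0" using exp_ge_add_one_self[of "- x"] by simp
    ultimately show "\<exists>z. DERIV ?f x :> z \<and> z \<ge> 0" by blast
  qed
  then show ?thesis by simp
qed


lemma exp_chord: assumes "0 \<le> x" "x \<le> (1::real)" shows "exp (- x) \<le> 1 - (1 - exp (-1)) * x"
proof -
  have "exp ((1 - x) *\<^sub>R 0 + x *\<^sub>R (-1)) \<le> (1 - x) * exp 0 + x * exp (-1)"
    using assms by (intro convex_onD[OF exp_convex]) auto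
  then show ?thesis by (simp add: algebra_simps)
qed

lemma walk_mono: "walk_le E k u v \<Longrightarrow> walk_le E (Suc k) u v" by simp

lemma walk_prepend: "walk_le E k u v \<Longrightarrow> E x u \<Longrightarrow> walk_le E (Suc k) x v"
proof (induction k arbitrary: v)
  case 0 then show ?case by auto
next
  case (Suc k)
  from Suc.prems(1) consider "walk_le E k u v" | w where "walk_le E k u w" "E w v" by auto
  then show ?case
  proof cases
    case 1 then show ?thesis using Suc by (meson walk_mono)
  next
    case 2
    then have "walk_le E (Suc k) x w" using Suc by blast
    then show ?thesis using 2 by auto
  qed
qed

lemma walk_sym: assumes sym: "\<And>u v. E u v \<Longrightarrow> E v u" shows "walk_le E k u v \<Longrightarrow> walk_le E k v u"
proof (induction k arbitrary: v)
  case 0 then show ?case by simp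
next
  case (Suc k)
  from Suc.prems consider "walk_le E k u v" | w where "walk_le E k u w" "E w v" by auto
  then show ?case
  proof cases
    case 1 then show ?thesis using Suc by simp
  next
    case 2
    then have "walk_le E k w u" using Suc by blast
    then show ?thesis using walk_prepend[of E k w u v] sym 2 by blast
  qed
qed

lemma greedy:
  fixes R :: "nat \<Rightarrow> nat \<Rightarrow> bool" and w :: "nat \<Rightarrow> real"
  assumes sym: "\<And>a b. R a b \<Longrightarrow> R b a" and refl: "\<And>a. a \<in> V \<Longrightarrow> R a a"
    and wpos: "\<And>a. a \<in> V \<Longrightarrow> w a > 0"
  shows "finite W \<Longrightarrow> W \<subseteq> V \<Longrightarrow> \<exists>S\<subseteq>W. (\<forall>a\<in>S. \<forall>b\<in>S. a \<noteq> b \<longrightarrow> \<not> R a b)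
      \<and> (\<Sum>v\<in>W. w v / (\<Sum>u\<in>{u\<in>W. R v u}. w u)) \<le> real (card S)"
proof (induction "card W" arbitrary: W rule: less_induct)
  case less
  show ?case
  proof (cases "W = {}")
    case True then show ?thesis by auto
  next
    case False
    define PW where "PW A v = (\<Sum>u\<in>{u\<in>A. R v u}. w u)" for A v
    have PWpos: "PW A v > 0" if "finite A" "A \<subseteq> V" "v \<in> A" for A v
    proof -
      have "w v \<le> PW A v" unfolding PW_def using that refl wpos
        by (intro member_le_sum) (auto intro: less_imp_le)
      then show ?thesis using wpos that by (meson less_le_trans subsetD)
    qed
    define m where "m = Min (PW W ` W)"
    have "m \<in> PW W ` W" unfolding m_def using False less.prems by (intro Min_in) auto
    then obtain v0 where v0: "v0 \<in> W" "PW W v0 = m" by auto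
    have minv: "PW W v0 \<le> PW W v" if "v \<in> W" for v
      using v0 that less.prems unfolding m_def by simp
    define D where "D = {u\<in>W. R v0 u}"
    define W' where "W' = W - D"
    have fW': "finite W'" "W' \<subseteq> V" using less.prems unfolding W'_def by auto
    have "v0 \<in> D" using v0 refl less.prems unfolding D_def by auto
    then have "W' \<subset> W" unfolding W'_def using v0 by auto
    then have cW': "card W' < card W" using less.prems by (intro psubset_card_mono) auto
    obtain S' where S': "S' \<subseteq> W'" "\<forall>a\<in>S'. \<forall>b\<in>S'. a \<noteq> b \<longrightarrow> \<not> R a b"
      "(\<Sum>v\<in>W'. w v / PW W' v) \<le> real (card S')"
      using less.hyps[OF cW' fW'] unfolding PW_def by blast
    define S where "S = insert v0 S'"
    have v0S': "v0 \<notin> S'" using S'(1) \<open>v0 \<in> D\<close> unfolding W'_def by auto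
    have indep: "\<forall>a\<in>S. \<forall>b\<in>S. a \<noteq> b \<longrightarrow> \<not> R a b"
    proof (intro ballI impI)
      fix a b assume ab: "a \<in> S" "b \<in> S" "a \<noteq> b"
      have nR: "\<not> R v0 x" if "x \<in> S'" for x using that S'(1) unfolding W'_def D_def by auto
      show "\<not> R a b"
      proof (cases "a = v0")
        case True then show ?thesis using ab nR unfolding S_def by auto
      next
        case False
        show ?thesis
        proof (cases "b = v0")
          case True then show ?thesis using ab nR sym False unfolding S_def by blast
        next
          case False then show ?thesis using ab \<open>a \<noteq> v0\<close> S'(2) unfolding S_def by auto
        qed
      qed
    qed
    have split: "(\<Sum>v\<in>W. w v / PW W v) = (\<Sum>v\<in>D. w v / PW W v) + (\<Sum>v\<in>W'. w v / PW W v)"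
    proof -
      have e: "W = D \<union> W'" "D \<inter> W' = {}" unfolding W'_def D_def by auto
      have fD: "finite D" using less.prems unfolding D_def by auto
      have "(\<Sum>v\<in>D \<union> W'. w v / PW W v) = (\<Sum>v\<in>D. w v / PW W v) + (\<Sum>v\<in>W'. w v / PW W v)"
        by (rule sum.union_disjoint[OF fD fW'(1) e(2)])
      then show ?thesis using e(1) by simp
    qed
    have pD: "(\<Sum>v\<in>D. w v / PW W v) \<le> 1"
    proof -
      have "(\<Sum>v\<in>D. w v / PW W v) \<le> (\<Sum>v\<in>D. w v / PW W v0)"
      proof (intro sum_mono divide_left_mono)
        fix v assume v: "v \<in> D"
        then have "v \<in> W" unfolding D_def by simp
        have "v \<in> V" using \<open>v \<in> W\<close> less.prems by auto
        then show "0 \<le> w v" using wpos less_imp_le by blast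
        show "PW W v0 \<le> PW W v" "0 < PW W v * PW W v0"
          using minv PWpos[OF less.prems] v0 \<open>v \<in> W\<close> by (auto intro: mult_pos_pos)
      qed
      also have "\<dots> = PW W v0 / PW W v0" unfolding PW_def D_def by (rule sum_divide_distrib[symmetric])
      also have "\<dots> = 1" using PWpos[OF less.prems v0(1)] by simp
      finally show ?thesis .
    qed
    have pW': "(\<Sum>v\<in>W'. w v / PW W v) \<le> (\<Sum>v\<in>W'. w v / PW W' v)"
    proof (intro sum_mono divide_left_mono)
      fix v assume v: "v \<in> W'"
      show "PW W' v \<le> PW W v" unfolding PW_def using less.prems wpos unfolding W'_def
        by (intro sum_mono2) (auto intro: less_imp_le)
      show "0 < PW W v * PW W' v" using PWpos[OF less.prems] PWpos[OF fW' v] v unfolding W'_def by auto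
      show "0 \<le> w v" using v fW' wpos by (auto intro: less_imp_le)
    qed
    have "finite S'" using S'(1) fW'(1) finite_subset by blast
    then have "card S = card S' + 1" unfolding S_def using v0S' by simp
    then have "(\<Sum>v\<in>W. w v / PW W v) \<le> real (card S)" using split pD pW' S'(3) by simp
    moreover have "S \<subseteq> W" using S'(1) v0 unfolding S_def W'_def by auto
    ultimately show ?thesis using indep unfolding PW_def by blast
  qed
qed

locale coop =
  fixes E :: "nat \<Rightarrow> nat \<Rightarrow> bool" and N K d :: nat and \<eta> :: real and L :: "nat \<Rightarrow> nat \<Rightarrow> real"
  assumes K2: "K \<ge> 2" and eta_pos: "\<eta> > 0" and eta_le: "\<eta> * real K * exp 1 * (real d + 1) \<le> 1"
    and Lb: "\<And>t i. i \<in> {1..K} \<Longrightarrow> 0 \<le> L t i \<and> L t i \<le> 1"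
    and Esym: "\<And>u v. E u v \<Longrightarrow> E v u"
begin

definition P where "P h t i v = coop_p E N K d \<eta> L h t i v"
definition q where "q h s i v = 1 - (\<Prod>v'\<in>nbhd E N d v. (1 - P h s i v'))"
definition Bf :: "(nat \<times> nat \<Rightarrow> nat) \<Rightarrow> nat \<Rightarrow> nat \<Rightarrow> nat \<Rightarrow> real" where
  "Bf h s i v = (if \<exists>v'\<in>nbhd E N d v. h (s, v') = i then 1 else 0)"
definition X where "X h t i v = (if d < t then L (t - d) i / q h (t - d) i v * Bf h (t - d) i v else 0)"
definition Z where "Z h t v = (\<Sum>j\<in>{1..K}. P h t j v * exp (- \<eta> * X h t j v))"

lemma P_0: "P h 0 i v = 1 / real K" by (simp add: P_def)

lemma P_Suc: "P h (Suc t) i v = (if t = 0 then 1 / real K else P h t i v * exp (- \<eta> * X h t i v) / Z h t v)"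
  unfolding P_def Z_def X_def q_def Bf_def by (simp add: Let_def)


lemma Kpos: "real K > 0" using K2 by simp

lemma P_pos_sum: "(\<forall>i\<in>{1..K}. P h t i v > 0) \<and> (\<Sum>j\<in>{1..K}. P h t j v) = 1"
proof (induction t)
  case 0
  then show ?case using Kpos by (simp add: P_0)
next
  case (Suc t)
  show ?case
  proof (cases "t = 0")
    case True
    then show ?thesis using Kpos by (simp add: P_Suc)
  next
    case False
    have Zp: "Z h t v > 0" unfolding Z_def
      using Suc.IH K2 by (intro sum_pos) auto
    have "(\<Sum>j\<in>{1..K}. P h (Suc t) j v) = (\<Sum>j\<in>{1..K}. P h t j v * exp (- \<eta> * X h t j v)) / Z h t v"
      using False by (simp add: P_Suc sum_divide_distrib)
    also have "\<dots> = 1" using Zp by (simp add: Z_def)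
    finally show ?thesis using False Suc.IH Zp by (simp add: P_Suc)
  qed
qed

lemma P_pos: "i \<in> {1..K} \<Longrightarrow> P h t i v > 0" using P_pos_sum by blast
lemma P_sum: "(\<Sum>j\<in>{1..K}. P h t j v) = 1" using P_pos_sum by blast
lemma P_nonneg[simp]: "i \<in> {1..K} \<Longrightarrow> 0 \<le> P h t i v" using P_pos less_imp_le by blast

lemma P_sum'[simp]: "(\<Sum>j = Suc 0..K. P h t j v) = 1" using P_sum by simp

lemma P_le1: assumes "i \<in> {1..K}" shows "P h t i v \<le> 1"
proof -
  have "P h t i v \<le> (\<Sum>j\<in>{1..K}. P h t j v)"
    using assms P_pos by (intro member_le_sum) (auto intro: less_imp_le)
  then show ?thesis using P_sum by simp
qed

lemma prod_1mP: assumes "i \<in> {1..K}" shows "0 \<le> (\<Prod>v'\<in>S. (1 - P h s i v'))" "(\<Prod>v'\<in>S. (1 - P h s i v')) \<le> 1"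
  using P_le1[OF assms] P_pos[OF assms]
  by (auto intro!: prod_nonneg prod_le_1 simp: less_imp_le)

lemma q_nonneg: "i \<in> {1..K} \<Longrightarrow> q h s i v \<ge> 0" using prod_1mP unfolding q_def by simp

lemma X_nonneg: "i \<in> {1..K} \<Longrightarrow> X h t i v \<ge> 0"
  unfolding X_def Bf_def using q_nonneg Lb by auto

lemma Z_pos: "Z h t v > 0" unfolding Z_def using K2 P_pos by (intro sum_pos) auto


lemma P_dep: "(\<And>x. fst x < t \<Longrightarrow> h x = h' x) \<Longrightarrow> P h t = P h' t"
proof (induction t arbitrary: rule: less_induct)
  case (less t)
  show ?case
  proof (cases t)
    case 0 then show ?thesis by (simp add: P_def fun_eq_iff)
  next
    case (Suc t0)
    have 1: "P h t0 = P h' t0" using less Suc by auto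
    have 2: "P h (t0 - d) = P h' (t0 - d)" using less Suc by auto
    have 3: "\<And>v'. h (t0 - d, v') = h' (t0 - d, v')" using less Suc by auto
    have "\<And>i v. P h (Suc t0) i v = P h' (Suc t0) i v"
      unfolding P_Suc X_def Z_def q_def Bf_def 1 2 3 ..
    then show ?thesis using Suc by (simp add: fun_eq_iff)
  qed
qed


definition "hist n = histories N K n"
definition "prob n h = coop_prob E N K d \<eta> L n h"
definition "EE n f = (\<Sum>h\<in>hist n. prob n h * f h)"
definition "Act = {1..N} \<rightarrow>\<^sub>E {1..K}"
definition "W s h a = (\<Prod>v\<in>{1..N}. P h s (a v) v)"
definition ext :: "nat \<Rightarrow> (nat \<times> nat \<Rightarrow> nat) \<Rightarrow> (nat \<Rightarrow> nat) \<Rightarrow> nat \<times> nat \<Rightarrow> nat" where "ext s h a = (\<lambda>x. if fst x = s then a (snd x) else h x)"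

lemma hist_arb: "h \<in> hist n \<Longrightarrow> x \<notin> {1..n} \<times> {1..N} \<Longrightarrow> h x = undefined"
  unfolding hist_def histories_def by (rule PiE_arb)

lemma finite_hist: "finite (hist n)"
  unfolding hist_def histories_def by (intro finite_PiE) auto
lemma finite_Act: "finite Act"
  unfolding Act_def by (intro finite_PiE) auto

lemma W_nonneg: "a \<in> Act \<Longrightarrow> W s h a \<ge> 0"
  unfolding W_def
proof (intro prod_nonneg ballI)
  fix v assume "a \<in> Act" "v \<in> {1..N}"
  then have "a v \<in> {1..K}" unfolding Act_def by auto
  then show "0 \<le> P h s (a v) v" using P_pos less_imp_le by blast
qed

lemma prod_sum_Act: "(\<Sum>a\<in>Act. \<Prod>v\<in>{1..N}. (f::nat\<Rightarrow>nat\<Rightarrow>real) v (a v)) = (\<Prod>v\<in>{1..N}. \<Sum>y\<in>{1..K}. f v y)"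
  unfolding Act_def using prod_sum_PiE[of "{1..N}" "\<lambda>_. {1..K}" f] by simp

lemma W_sum: "(\<Sum>a\<in>Act. W s h a) = 1"
  unfolding W_def using prod_sum_Act[of "\<lambda>v y. P h s y v"] P_sum by simp

lemma prob_nonneg: "h \<in> hist n \<Longrightarrow> prob n h \<ge> 0"
  unfolding prob_def coop_prob_def P_def[symmetric]
proof (intro prod_nonneg ballI)
  fix s v assume "h \<in> hist n" "s \<in> {1..n}" "v \<in> {1..N}"
  then have "h (s, v) \<in> {1..K}" unfolding hist_def histories_def by auto
  then show "0 \<le> P h s (h (s, v)) v" using P_pos less_imp_le by blast
qed

lemma prob_Suc:
  assumes h: "h \<in> hist n" and a: "a \<in> Act"
  shows "prob (Suc n) (ext (Suc n) h a) = prob n h * W (Suc n) h a"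
proof -
  let ?g = "ext (Suc n) h a"
  have dg: "\<And>s. s \<le> Suc n \<Longrightarrow> P ?g s = P h s"
    by (rule P_dep) (auto simp: ext_def)
  have "prob (Suc n) ?g = (\<Prod>s\<in>insert (Suc n) {1..n}. \<Prod>v\<in>{1..N}. P ?g s (?g (s, v)) v)"
    unfolding prob_def coop_prob_def P_def[symmetric]
    by (simp add: atLeastAtMostSuc_conv)
  also have "\<dots> = (\<Prod>v\<in>{1..N}. P ?g (Suc n) (?g (Suc n, v)) v) * (\<Prod>s\<in>{1..n}. \<Prod>v\<in>{1..N}. P ?g s (?g (s, v)) v)"
    by simp
  also have "(\<Prod>v\<in>{1..N}. P ?g (Suc n) (?g (Suc n, v)) v) = W (Suc n) h a"
    unfolding W_def dg[OF order_refl] by (simp add: ext_def)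
  also have "(\<Prod>s\<in>{1..n}. \<Prod>v\<in>{1..N}. P ?g s (?g (s, v)) v) = prob n h"
    unfolding prob_def coop_prob_def P_def[symmetric]
  proof (intro prod.cong refl)
    fix s v assume "s \<in> {1..n}" "v \<in> {1..N}"
    then show "P ?g s (?g (s, v)) v = P h s (h (s, v)) v" using dg[of s] by (simp add: ext_def)
  qed
  finally show ?thesis by simp
qed

lemma ext_in: "h \<in> hist n \<Longrightarrow> a \<in> Act \<Longrightarrow> ext (Suc n) h a \<in> hist (Suc n)"
  unfolding hist_def histories_def Act_def ext_def
  by (auto simp: PiE_iff extensional_def)

lemma hist_mem: "g \<in> hist n \<Longrightarrow> x \<in> {1..n} \<times> {1..N} \<Longrightarrow> g x \<in> {1..K}"
  unfolding hist_def histories_def by auto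

lemma hist_Suc: "hist (Suc n) = (\<lambda>(h, a). ext (Suc n) h a) ` (hist n \<times> Act)"
proof
  show "(\<lambda>(h, a). ext (Suc n) h a) ` (hist n \<times> Act) \<subseteq> hist (Suc n)" using ext_in by auto
  show "hist (Suc n) \<subseteq> (\<lambda>(h, a). ext (Suc n) h a) ` (hist n \<times> Act)"
  proof
    fix g assume g: "g \<in> hist (Suc n)"
    define h where "h = (\<lambda>x. if fst x = Suc n then undefined else g x)"
    define a where "a = (\<lambda>v. if v \<in> {1..N} then g (Suc n, v) else undefined)"
    have "h \<in> hist n" unfolding hist_def histories_def
    proof (rule PiE_I)
      fix x assume "x \<in> {1..n} \<times> {1..N}"
      then show "h x \<in> {1..K}" using hist_mem[OF g, of x] by (auto simp: h_def)
    next
      fix x assume x: "x \<notin> {1..n} \<times> {1..N}"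
      show "h x = undefined"
      proof (cases "fst x = Suc n")
        case False
        then have "x \<notin> {1..Suc n} \<times> {1..N}" using x by (cases x) auto
        then show ?thesis using hist_arb[OF g, of x] False by (simp add: h_def)
      qed (simp add: h_def)
    qed
    moreover have "a \<in> Act" unfolding Act_def
    proof (rule PiE_I)
      fix v assume "v \<in> {1..N}"
      then show "a v \<in> {1..K}" using hist_mem[OF g, of "(Suc n, v)"] by (auto simp: a_def)
    qed (auto simp: a_def)
    moreover have "g = ext (Suc n) h a"
    proof
      fix x
      show "g x = ext (Suc n) h a x"
      proof (cases "fst x = Suc n \<and> snd x \<notin> {1..N}")
        case True
        then have "x \<notin> {1..Suc n} \<times> {1..N}" by auto
        then have "g x = undefined" using g hist_arb by metis
        then show ?thesis using True by (auto simp: ext_def a_def)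
      next
        case False
        then show ?thesis by (cases x) (auto simp: ext_def a_def h_def)
      qed
    qed
    ultimately show "g \<in> (\<lambda>(h, a). ext (Suc n) h a) ` (hist n \<times> Act)" by auto
  qed
qed

lemma inj_ext: "inj_on (\<lambda>(h, a). ext (Suc n) h a) (hist n \<times> Act)"
proof (rule inj_onI)
  fix x y assume x: "x \<in> hist n \<times> Act" and y: "y \<in> hist n \<times> Act"
    and e0: "(\<lambda>(h, a). ext (Suc n) h a) x = (\<lambda>(h, a). ext (Suc n) h a) y"
  obtain h a where xe: "x = (h, a)" by (cases x)
  obtain h' a' where ye: "y = (h', a')" by (cases y)
  have h: "h \<in> hist n" "h' \<in> hist n" using x y xe ye by auto
  have e: "ext (Suc n) h a = ext (Suc n) h' a'" using e0 xe ye by simp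
  have "h = h'"
  proof
    fix z show "h z = h' z"
    proof (cases "fst z = Suc n")
      case True
      then have "z \<notin> {1..n} \<times> {1..N}" by auto
      then show ?thesis using h hist_arb by metis
    next
      case False
      have "ext (Suc n) h a z = ext (Suc n) h' a' z" using e by simp
      then show ?thesis using False unfolding ext_def by simp
    qed
  qed
  moreover have "a = a'"
  proof
    fix v
    have "ext (Suc n) h a (Suc n, v) = ext (Suc n) h' a' (Suc n, v)" using e by simp
    then show "a v = a' v" unfolding ext_def by simp
  qed
  ultimately show "x = y" using xe ye by simp
qed

lemma EE_Suc: "EE (Suc n) g = EE n (\<lambda>h. \<Sum>a\<in>Act. W (Suc n) h a * g (ext (Suc n) h a))"
proof -
  have "EE (Suc n) g = (\<Sum>x\<in>hist n \<times> Act. prob (Suc n) (ext (Suc n) (fst x) (snd x)) * g (ext (Suc n) (fst x) (snd x)))"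
    unfolding EE_def hist_Suc sum.reindex[OF inj_ext] by (simp add: case_prod_beta)
  also have "\<dots> = (\<Sum>h\<in>hist n. \<Sum>a\<in>Act. prob (Suc n) (ext (Suc n) h a) * g (ext (Suc n) h a))"
    by (simp add: sum.cartesian_product')
  also have "\<dots> = (\<Sum>h\<in>hist n. \<Sum>a\<in>Act. prob n h * (W (Suc n) h a * g (ext (Suc n) h a)))"
    by (intro sum.cong refl) (simp add: prob_Suc)
  also have "\<dots> = EE n (\<lambda>h. \<Sum>a\<in>Act. W (Suc n) h a * g (ext (Suc n) h a))"
    unfolding EE_def by (simp add: sum_distrib_left)
  finally show ?thesis .
qed


definition dep :: "nat \<Rightarrow> ((nat \<times> nat \<Rightarrow> nat) \<Rightarrow> real) \<Rightarrow> bool" where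
  "dep m f \<longleftrightarrow> (\<forall>h h'. (\<forall>x. fst x \<le> m \<longrightarrow> h x = h' x) \<longrightarrow> f h = f h')"

lemma depD: "dep m f \<Longrightarrow> (\<And>x. fst x \<le> m \<Longrightarrow> h x = h' x) \<Longrightarrow> f h = f h'"
  unfolding dep_def by blast

lemma depI: "(\<And>h h'. (\<And>x. fst x \<le> m \<Longrightarrow> h x = h' x) \<Longrightarrow> f h = f h') \<Longrightarrow> dep m f"
  unfolding dep_def by blast

lemma dep_mono: assumes "dep m f" "m \<le> m'" shows "dep m' f"
  by (rule depI, rule depD[OF assms(1)]) (use assms(2) in auto)
lemma dep_const: "dep m (\<lambda>_. c)" unfolding dep_def by simp
lemma dep_add: assumes "dep m f" "dep m g" shows "dep m (\<lambda>h. f h + g h)"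
proof (rule depI)
  fix h h' :: "nat \<times> nat \<Rightarrow> nat" assume "\<And>x. fst x \<le> m \<Longrightarrow> h x = h' x"
  then show "f h + g h = f h' + g h'" using depD[OF assms(1)] depD[OF assms(2)] by metis
qed
lemma dep_mult: assumes "dep m f" "dep m g" shows "dep m (\<lambda>h. f h * g h)"
proof (rule depI)
  fix h h' :: "nat \<times> nat \<Rightarrow> nat" assume "\<And>x. fst x \<le> m \<Longrightarrow> h x = h' x"
  then show "f h * g h = f h' * g h'" using depD[OF assms(1)] depD[OF assms(2)] by metis
qed
lemma dep_comp: assumes "dep m f" shows "dep m (\<lambda>h. \<phi> (f h))"
proof (rule depI)
  fix h h' :: "nat \<times> nat \<Rightarrow> nat" assume "\<And>x. fst x \<le> m \<Longrightarrow> h x = h' x"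
  then show "\<phi> (f h) = \<phi> (f h')" using depD[OF assms(1)] by metis
qed
lemma dep_sum: assumes "\<And>i. i \<in> I \<Longrightarrow> dep m (f i)" shows "dep m (\<lambda>h. \<Sum>i\<in>I. f i h)"
proof (rule depI)
  fix h h' :: "nat \<times> nat \<Rightarrow> nat" assume a: "\<And>x. fst x \<le> m \<Longrightarrow> h x = h' x"
  show "(\<Sum>i\<in>I. f i h) = (\<Sum>i\<in>I. f i h')"
    by (rule sum.cong[OF refl], rule depD[OF assms a]) auto
qed
lemma dep_prod: assumes "\<And>i. i \<in> I \<Longrightarrow> dep m (f i)" shows "dep m (\<lambda>h. \<Prod>i\<in>I. f i h)"
proof (rule depI)
  fix h h' :: "nat \<times> nat \<Rightarrow> nat" assume a: "\<And>x. fst x \<le> m \<Longrightarrow> h x = h' x"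
  show "(\<Prod>i\<in>I. f i h) = (\<Prod>i\<in>I. f i h')"
    by (rule prod.cong[OF refl], rule depD[OF assms a]) auto
qed

lemma dep_P: assumes "s \<le> Suc m" shows "dep m (\<lambda>h. P h s i v)"
proof (rule depI)
  fix h h' :: "nat \<times> nat \<Rightarrow> nat" assume "\<And>x. fst x \<le> m \<Longrightarrow> h x = h' x"
  then have "P h s = P h' s" using assms by (intro P_dep) auto
  then show "P h s i v = P h' s i v" by simp
qed

lemma dep_W: "dep m (\<lambda>h. W (Suc m) h a)"
  unfolding W_def by (intro dep_prod dep_P) simp

lemma EE_cong: "(\<And>h. h \<in> hist n \<Longrightarrow> f h = g h) \<Longrightarrow> EE n f = EE n g"
  unfolding EE_def by (auto intro!: sum.cong)

lemma EE_mono: "(\<And>h. h \<in> hist n \<Longrightarrow> f h \<le> g h) \<Longrightarrow> EE n f \<le> EE n g"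
  unfolding EE_def by (auto intro!: sum_mono mult_left_mono prob_nonneg)

lemma EE_add: "EE n (\<lambda>h. f h + g h) = EE n f + EE n g"
  unfolding EE_def by (simp add: distrib_left sum.distrib)

lemma EE_diff: "EE n (\<lambda>h. f h - g h) = EE n f - EE n g"
  unfolding EE_def by (simp add: right_diff_distrib sum_subtractf)

lemma EE_cmult: "EE n (\<lambda>h. c * f h) = c * EE n f"
  unfolding EE_def by (simp add: sum_distrib_left mult.left_commute)

lemma EE_sum: "EE n (\<lambda>h. \<Sum>i\<in>I. f i h) = (\<Sum>i\<in>I. EE n (f i))"
  unfolding EE_def sum_distrib_left by (rule sum.swap)

lemma EE_marg: assumes "m \<le> n" "dep m f" shows "EE n f = EE m f"
  using assms(1)
proof (induction n)
  case 0 then show ?case by simp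
next
  case (Suc n)
  show ?case
  proof (cases "m = Suc n")
    case True then show ?thesis by simp
  next
    case False
    then have mn: "m \<le> n" using Suc by simp
    have "EE (Suc n) f = EE n (\<lambda>h. \<Sum>a\<in>Act. W (Suc n) h a * f (ext (Suc n) h a))" by (rule EE_Suc)
    also have "\<dots> = EE n (\<lambda>h. (\<Sum>a\<in>Act. W (Suc n) h a) * f h)"
      unfolding sum_distrib_right
    proof (intro EE_cong sum.cong refl arg_cong[where f="\<lambda>x. _ * x"])
      fix h a show "f (ext (Suc n) h a) = f h"
        using mn by (intro depD[OF assms(2)]) (auto simp: ext_def)
    qed
    also have "\<dots> = EE n f" by (simp add: W_sum)
    finally show ?thesis using Suc.IH mn by simp
  qed
qed

lemma hist0: "hist 0 = {\<lambda>_. undefined}"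
  unfolding hist_def histories_def by simp

lemma EE_const: "EE n (\<lambda>_. c) = c"
proof -
  have "EE n (\<lambda>_. c) = EE 0 (\<lambda>_. c)" by (rule EE_marg) (auto intro: dep_const)
  also have "\<dots> = c" unfolding EE_def hist0 prob_def coop_prob_def by simp
  finally show ?thesis .
qed

lemma EE_round:
  assumes s: "1 \<le> s" "s \<le> n" and G: "\<And>a. dep (s - 1) (\<lambda>h. G h a)"
  shows "EE n (\<lambda>h. G h (\<lambda>v. h (s, v))) = EE n (\<lambda>h. \<Sum>a\<in>Act. W s h a * G h a)"
proof -
  obtain m where m: "s = Suc m" using s by (cases s) auto
  have G': "\<And>a. dep m (\<lambda>h. G h a)" using G m by simp
  have d1: "dep s (\<lambda>h. G h (\<lambda>v. h (s, v)))"
  proof (rule depI)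
    fix h h' :: "nat \<times> nat \<Rightarrow> nat" assume hh: "\<And>x. fst x \<le> s \<Longrightarrow> h x = h' x"
    have "(\<lambda>v. h (s, v)) = (\<lambda>v. h' (s, v))" using hh by auto
    moreover have "G h a = G h' a" for a using hh m by (intro depD[OF G']) auto
    ultimately show "G h (\<lambda>v. h (s, v)) = G h' (\<lambda>v. h' (s, v))" by simp
  qed
  have d2: "dep m (\<lambda>h. \<Sum>a\<in>Act. W s h a * G h a)"
    using G' dep_W m by (auto intro!: dep_sum dep_mult)
  have "EE n (\<lambda>h. G h (\<lambda>v. h (s, v))) = EE s (\<lambda>h. G h (\<lambda>v. h (s, v)))"
    using s d1 by (intro EE_marg) auto
  also have "\<dots> = EE m (\<lambda>h. \<Sum>a\<in>Act. W s h a * G (ext s h a) (\<lambda>v. ext s h a (s, v)))"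
    unfolding m by (rule EE_Suc)
  also have "\<dots> = EE m (\<lambda>h. \<Sum>a\<in>Act. W s h a * G h a)"
  proof (intro EE_cong sum.cong refl arg_cong[where f="\<lambda>x. _ * x"])
    fix h a
    have "(\<lambda>v. ext s h a (s, v)) = a" by (simp add: ext_def)
    moreover have "G (ext s h a) a = G h a" using m by (intro depD[OF G']) (auto simp: ext_def)
    ultimately show "G (ext s h a) (\<lambda>v. ext s h a (s, v)) = G h a" by simp
  qed
  also have "\<dots> = EE n (\<lambda>h. \<Sum>a\<in>Act. W s h a * G h a)"
    using s m d2 by (intro EE_marg[symmetric]) auto
  finally show ?thesis .
qed


lemma round_single:
  assumes v: "v \<in> {1..N}"
  shows "(\<Sum>a\<in>Act. W s h a * \<phi> (a v)) = (\<Sum>y\<in>{1..K}. P h s y v * \<phi> y)"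
proof -
  define f where "f w y = P h s y w * (if w = v then \<phi> y else 1)" for w y
  have "(\<Sum>a\<in>Act. W s h a * \<phi> (a v)) = (\<Sum>a\<in>Act. \<Prod>w\<in>{1..N}. f w (a w))"
  proof (intro sum.cong refl)
    fix a
    have "(\<Prod>w\<in>{1..N}. f w (a w)) = (\<Prod>w\<in>{1..N}. P h s (a w) w) * (\<Prod>w\<in>{1..N}. if w = v then \<phi> (a w) else 1)"
      unfolding f_def prod.distrib by (simp add: if_distrib)
    also have "(\<Prod>w\<in>{1..N}. if w = v then \<phi> (a w) else 1) = \<phi> (a v)"
      using v by (simp add: prod.delta)
    finally show "W s h a * \<phi> (a v) = (\<Prod>w\<in>{1..N}. f w (a w))" by (simp add: W_def)
  qed
  also have "\<dots> = (\<Prod>w\<in>{1..N}. \<Sum>y\<in>{1..K}. f w y)" by (rule prod_sum_Act)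
  also have "\<dots> = (\<Prod>w\<in>{1..N}. if w = v then (\<Sum>y\<in>{1..K}. P h s y v * \<phi> y) else 1)"
    by (intro prod.cong refl) (auto simp: f_def P_sum)
  also have "\<dots> = (\<Sum>y\<in>{1..K}. P h s y v * \<phi> y)" using v by (simp add: prod.delta)
  finally show ?thesis .
qed

lemma round_none:
  assumes S: "S \<subseteq> {1..N}" and i: "i \<in> {1..K}"
  shows "(\<Sum>a\<in>Act. W s h a * (if \<exists>w\<in>S. a w = i then 0 else 1)) = (\<Prod>w\<in>S. (1 - P h s i w))"
proof -
  define f where "f w y = P h s y w * (if w \<in> S \<and> y = i then 0 else 1)" for w y
  have "(\<Sum>a\<in>Act. W s h a * (if \<exists>w\<in>S. a w = i then 0 else 1)) = (\<Sum>a\<in>Act. \<Prod>w\<in>{1..N}. f w (a w))"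
  proof (intro sum.cong refl)
    fix a
    have "(\<Prod>w\<in>{1..N}. f w (a w)) = (\<Prod>w\<in>{1..N}. P h s (a w) w) * (\<Prod>w\<in>{1..N}. if w \<in> S \<and> a w = i then 0 else 1)"
      unfolding f_def prod.distrib by simp
    also have "(\<Prod>w\<in>{1..N}. if w \<in> S \<and> a w = i then 0 else 1) = (if \<exists>w\<in>S. a w = i then 0 else (1::real))"
    proof (cases "\<exists>w\<in>S. a w = i")
      case True
      then obtain w where "w \<in> S" "a w = i" by blast
      then have "\<exists>w\<in>{1..N}. w \<in> S \<and> a w = i" using S by auto
      then show ?thesis by (auto intro!: prod_zero)
    next
      case False then show ?thesis by (simp add: prod.neutral)
    qed
    finally show "W s h a * (if \<exists>w\<in>S. a w = i then 0 else 1) = (\<Prod>w\<in>{1..N}. f w (a w))" by (simp add: W_def)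
  qed
  also have "\<dots> = (\<Prod>w\<in>{1..N}. \<Sum>y\<in>{1..K}. f w y)" by (rule prod_sum_Act)
  also have "\<dots> = (\<Prod>w\<in>{1..N}. if w \<in> S then 1 - P h s i w else 1)"
  proof (intro prod.cong refl)
    fix w
    show "(\<Sum>y\<in>{1..K}. f w y) = (if w \<in> S then 1 - P h s i w else 1)"
    proof (cases "w \<in> S")
      case True
      have "(\<Sum>y\<in>{1..K}. f w y) = (\<Sum>y\<in>{1..K}. P h s y w - (if y = i then P h s y w else 0))"
        using True by (intro sum.cong refl) (auto simp: f_def)
      also have "\<dots> = 1 - P h s i w" using i by (simp add: sum_subtractf P_sum)
      finally show ?thesis using True by simp
    qed (simp add: f_def P_sum)
  qed
  also have "\<dots> = (\<Prod>w\<in>S. (1 - P h s i w))"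
    using S by (simp add: prod.If_cases Int_absorb1)
  finally show ?thesis .
qed

lemma round_some:
  assumes S: "S \<subseteq> {1..N}" and i: "i \<in> {1..K}"
  shows "(\<Sum>a\<in>Act. W s h a * (if \<exists>w\<in>S. a w = i then 1 else 0)) = 1 - (\<Prod>w\<in>S. (1 - P h s i w))"
proof -
  have "(\<Sum>a\<in>Act. W s h a * (if \<exists>w\<in>S. a w = i then 1 else 0)) =
        (\<Sum>a\<in>Act. W s h a) - (\<Sum>a\<in>Act. W s h a * (if \<exists>w\<in>S. a w = i then 0 else 1))"
    by (subst sum_subtractf[symmetric]) (auto intro!: sum.cong)
  then show ?thesis using round_none[OF S i] W_sum by simp
qed


lemma nbhd_sub: "nbhd E N d v \<subseteq> {1..N}" unfolding nbhd_def by auto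
lemma finite_nbhd: "finite (nbhd E N d v)" using nbhd_sub finite_subset by blast
lemma nbhd_self: "v \<in> {1..N} \<Longrightarrow> v \<in> nbhd E N d v" unfolding nbhd_def by (simp add: walk_refl)

lemma q_ge_P: assumes v: "v \<in> {1..N}" and i: "i \<in> {1..K}" shows "q h s i v \<ge> P h s i v"
proof -
  have "(\<Prod>v'\<in>nbhd E N d v. (1 - P h s i v')) = (1 - P h s i v) * (\<Prod>v'\<in>nbhd E N d v - {v}. (1 - P h s i v'))"
    using nbhd_self[OF v] finite_nbhd by (simp add: prod.remove)
  also have "\<dots> \<le> (1 - P h s i v) * 1"
    using prod_1mP[OF i] P_le1[OF i] by (intro mult_left_mono) auto
  finally show ?thesis unfolding q_def by simp
qed

lemma q_pos: "v \<in> {1..N} \<Longrightarrow> i \<in> {1..K} \<Longrightarrow> q h s i v > 0"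
  using q_ge_P P_pos by (meson less_le_trans)

lemma Bf_01: "Bf h s i v \<ge> 0" "Bf h s i v \<le> 1" "Bf h s i v * Bf h s i v = Bf h s i v"
  unfolding Bf_def by auto

lemma dep_Bf: assumes "s \<le> m" shows "dep m (\<lambda>h. Bf h s i v)"
proof (rule depI)
  fix h h' :: "nat \<times> nat \<Rightarrow> nat" assume a: "\<And>x. fst x \<le> m \<Longrightarrow> h x = h' x"
  have "\<And>w. h (s, w) = h' (s, w)" using a assms by simp
  then show "Bf h s i v = Bf h' s i v" unfolding Bf_def by simp
qed

lemma dep_q: assumes "s \<le> Suc m" shows "dep m (\<lambda>h. q h s i v)"
proof (rule depI)
  fix h h' :: "nat \<times> nat \<Rightarrow> nat" assume a: "\<And>x. fst x \<le> m \<Longrightarrow> h x = h' x"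
  have "P h s = P h' s" using assms a by (intro P_dep) auto
  then show "q h s i v = q h' s i v" unfolding q_def by simp
qed

lemma dep_X: assumes "t - d \<le> m" shows "dep m (\<lambda>h. X h t i v)"
proof (rule depI)
  fix h h' :: "nat \<times> nat \<Rightarrow> nat" assume a: "\<And>x. fst x \<le> m \<Longrightarrow> h x = h' x"
  have "q h (t - d) i v = q h' (t - d) i v" using assms by (intro depD[OF dep_q a]) auto
  moreover have "Bf h (t - d) i v = Bf h' (t - d) i v" using assms by (intro depD[OF dep_Bf a]) auto
  ultimately show "X h t i v = X h' t i v" unfolding X_def by simp
qed

lemma EE_loss:
  assumes "1 \<le> t" "t \<le> n" "v \<in> {1..N}"
  shows "EE n (\<lambda>h. \<phi> (h (t, v))) = EE n (\<lambda>h. \<Sum>y\<in>{1..K}. P h t y v * \<phi> y)"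
proof -
  have "EE n (\<lambda>h. \<phi> (h (t, v))) = EE n (\<lambda>h. \<Sum>a\<in>Act. W t h a * \<phi> (a v))"
    using EE_round[of t n "\<lambda>h a. \<phi> (a v)"] assms by (simp add: dep_const)
  also have "\<dots> = EE n (\<lambda>h. \<Sum>y\<in>{1..K}. P h t y v * \<phi> y)"
    using assms(3) by (simp add: round_single)
  finally show ?thesis .
qed

lemma EE_Bf:
  assumes "1 \<le> s" "s \<le> n" "v \<in> {1..N}" "i \<in> {1..K}" and c: "dep (s - 1) c"
  shows "EE n (\<lambda>h. c h * Bf h s i v) = EE n (\<lambda>h. c h * q h s i v)"
proof -
  have "EE n (\<lambda>h. c h * Bf h s i v) = EE n (\<lambda>h. \<Sum>a\<in>Act. W s h a * (c h * (if \<exists>w\<in>nbhd E N d v. a w = i then 1 else 0)))"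
  proof -
    have G: "\<And>a. dep (s - 1) (\<lambda>h. c h * (if \<exists>w\<in>nbhd E N d v. a w = i then 1 else 0))"
      by (rule dep_mult[OF c dep_const])
    have "(\<lambda>h. c h * Bf h s i v) = (\<lambda>h. (\<lambda>h a. c h * (if \<exists>w\<in>nbhd E N d v. a w = i then 1 else 0)) h (\<lambda>v. h (s, v)))"
      unfolding Bf_def by simp
    then show ?thesis using EE_round[OF assms(1,2) G] by simp
  qed
  also have "\<dots> = EE n (\<lambda>h. c h * q h s i v)"
  proof (rule EE_cong)
    fix h
    have "(\<Sum>a\<in>Act. W s h a * (c h * (if \<exists>w\<in>nbhd E N d v. a w = i then 1 else 0)))
      = c h * (\<Sum>a\<in>Act. W s h a * (if \<exists>w\<in>nbhd E N d v. a w = i then 1 else 0))"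
      by (simp add: sum_distrib_left mult_ac)
    also have "\<dots> = c h * q h s i v" using round_some[OF nbhd_sub assms(4)] by (simp add: q_def)
    finally show "(\<Sum>a\<in>Act. W s h a * (c h * (if \<exists>w\<in>nbhd E N d v. a w = i then 1 else 0))) = c h * q h s i v" .
  qed
  finally show ?thesis .
qed


lemma X_zero: "t \<le> d \<Longrightarrow> X h t i v = 0" unfolding X_def by simp

lemma Z_le1: "Z h t v \<le> 1"
proof -
  have "Z h t v \<le> (\<Sum>j\<in>{1..K}. P h t j v)" unfolding Z_def
  proof (intro sum_mono)
    fix j assume j: "j \<in> {1..K}"
    have "exp (- \<eta> * X h t j v) \<le> 1" using X_nonneg[OF j] eta_pos by simp
    then show "P h t j v * exp (- \<eta> * X h t j v) \<le> P h t j v"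
      using P_pos[OF j] by (simp add: mult_left_le)
  qed
  then show ?thesis using P_sum by simp
qed

lemma P_step_lower: assumes i: "i \<in> {1..K}" shows "P h (Suc t) i v \<ge> P h t i v * exp (- \<eta> * X h t i v)"
proof (cases "t = 0")
  case True then show ?thesis by (simp add: P_Suc P_0 X_def)
next
  case False
  have a: "P h t i v * exp (- \<eta> * X h t i v) \<ge> 0" using P_pos[OF i, of h t v] by simp
  have "P h t i v * exp (- \<eta> * X h t i v) * Z h t v \<le> P h t i v * exp (- \<eta> * X h t i v)"
    using Z_le1[of h t v] a by (simp add: mult_left_le)
  then have "P h t i v * exp (- \<eta> * X h t i v) \<le> P h t i v * exp (- \<eta> * X h t i v) / Z h t v"
    using Z_pos[of h t v] by (simp add: le_divide_eq)
  then show ?thesis using False by (simp add: P_Suc)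
qed

lemma P_lower_exp: assumes i: "i \<in> {1..K}"
  shows "P h (s + m) i v \<ge> P h s i v * exp (- \<eta> * (\<Sum>r\<in>{s..<s+m}. X h r i v))"
proof (induction m)
  case 0 then show ?case by simp
next
  case (Suc m)
  have "P h s i v * exp (- \<eta> * (\<Sum>r\<in>{s..<s + Suc m}. X h r i v))
      = (P h s i v * exp (- \<eta> * (\<Sum>r\<in>{s..<s+m}. X h r i v))) * exp (- \<eta> * X h (s + m) i v)"
    by (simp add: distrib_left exp_add[symmetric] algebra_simps)
  also have "\<dots> \<le> P h (s + m) i v * exp (- \<eta> * X h (s + m) i v)"
    using Suc.IH by (intro mult_right_mono) auto
  also have "\<dots> \<le> P h (Suc (s + m)) i v" by (rule P_step_lower[OF i])
  finally show ?case by simp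
qed

lemma P_lower: assumes i: "i \<in> {1..K}"
  shows "P h (s + m) i v \<ge> P h s i v * (1 - \<eta> * (\<Sum>r\<in>{s..<s+m}. X h r i v))"
proof -
  have "1 - \<eta> * (\<Sum>r\<in>{s..<s+m}. X h r i v) \<le> exp (- \<eta> * (\<Sum>r\<in>{s..<s+m}. X h r i v))"
    using exp_ge_add_one_self[of "- \<eta> * (\<Sum>r\<in>{s..<s+m}. X h r i v)"] by simp
  then have "P h s i v * (1 - \<eta> * (\<Sum>r\<in>{s..<s+m}. X h r i v)) \<le> P h s i v * exp (- \<eta> * (\<Sum>r\<in>{s..<s+m}. X h r i v))"
    using P_pos[OF i, of h s v] by (intro mult_left_mono) auto
  then show ?thesis using P_lower_exp[OF i, of h s v m] by linarith
qed

lemma X_le_inv: assumes v: "v \<in> {1..N}" and i: "i \<in> {1..K}" and t: "d < t"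
  shows "X h t i v \<le> 1 / P h (t - d) i v"
proof -
  have qp: "q h (t - d) i v \<ge> P h (t - d) i v" "P h (t - d) i v > 0" using q_ge_P[OF v i] P_pos[OF i] by auto
  have "X h t i v = L (t - d) i * Bf h (t - d) i v / q h (t - d) i v" using t by (simp add: X_def)
  also have "\<dots> \<le> 1 / q h (t - d) i v"
    using Lb[OF i, of "t - d"] Bf_01[of h "t - d" i v] qp
    by (intro divide_right_mono) (auto intro: mult_le_one)
  also have "\<dots> \<le> 1 / P h (t - d) i v" using qp by (intro divide_left_mono) auto
  finally show ?thesis .
qed

lemma rho_pow: assumes "d \<ge> 1" shows "((real d + 1) / real d) ^ d \<le> exp 1"
proof -
  have "(real d + 1) / real d = 1 + 1 / real d" using assms by (simp add: field_simps)
  also have "\<dots> \<le> exp (1 / real d)" by (rule exp_ge_add_one_self)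
  finally have "((real d + 1) / real d) ^ d \<le> exp (1 / real d) ^ d" by (intro power_mono) auto
  also have "\<dots> = exp 1" using assms by (simp add: exp_of_nat_mult[symmetric])
  finally show ?thesis .
qed

lemma chain:
  assumes step: "\<And>r j. u \<le> r \<Longrightarrow> r < u + m \<Longrightarrow> j \<in> {1..K} \<Longrightarrow> P h (Suc r) j v \<le> \<rho> * P h r j v"
    and i: "i \<in> {1..K}" and rho: "\<rho> \<ge> 0"
  shows "P h (u + m) i v \<le> \<rho> ^ m * P h u i v"
  using step
proof (induction m)
  case 0 then show ?case by simp
next
  case (Suc m)
  have "P h (u + Suc m) i v \<le> \<rho> * P h (u + m) i v" using Suc.prems[of "u + m" i] i by simp
  also have "\<dots> \<le> \<rho> * (\<rho> ^ m * P h u i v)" using Suc rho by (intro mult_left_mono) auto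
  finally show ?case by (simp add: mult_ac)
qed

lemma P_step_upper:
  assumes d: "d \<ge> 1" and v: "v \<in> {1..N}"
  shows "i \<in> {1..K} \<Longrightarrow> P h (Suc t) i v \<le> ((real d + 1) / real d) * P h t i v"
proof (induction t arbitrary: i rule: less_induct)
  case (less t)
  define \<rho> where "\<rho> = (real d + 1) / real d"
  have rho1: "\<rho> \<ge> 1" using d by (simp add: \<rho>_def)
  have Pp: "P h t i v > 0" using P_pos[OF less.prems] .
  show ?case
  proof (cases "d < t")
    case False
    have "P h (Suc t) i v = P h t i v"
    proof (cases "t = 0")
      case True then show ?thesis by (simp add: P_Suc P_0)
    next
      case t0: False
      have "Z h t v = 1" using False P_sum by (simp add: Z_def X_zero)
      then show ?thesis using t0 False by (simp add: P_Suc X_zero)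
    qed
    moreover have "P h t i v \<le> \<rho> * P h t i v" using mult_right_mono[OF rho1, of "P h t i v"] Pp by simp
    ultimately show ?thesis unfolding \<rho>_def by simp
  next
    case True
    have ratio: "P h t j v \<le> exp 1 * P h (t - d) j v" if j: "j \<in> {1..K}" for j
    proof -
      have "P h (t - d + d) j v \<le> \<rho> ^ d * P h (t - d) j v"
        using less.IH j rho1 True unfolding \<rho>_def by (intro chain) auto
      also have "\<dots> \<le> exp 1 * P h (t - d) j v"
        using rho_pow[OF d] P_nonneg[OF j] unfolding \<rho>_def by (intro mult_right_mono) auto
      finally show ?thesis using True by simp
    qed
    have px: "P h t j v * X h t j v \<le> exp 1" if j: "j \<in> {1..K}" for j
    proof -
      have "P h t j v * X h t j v \<le> P h t j v * (1 / P h (t - d) j v)"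
        using X_le_inv[OF v j True] P_nonneg[OF j] by (intro mult_left_mono) auto
      also have "\<dots> \<le> exp 1" using ratio[OF j] P_pos[OF j] by (simp add: divide_le_eq)
      finally show ?thesis .
    qed
    have Za: "Z h t v \<ge> (\<Sum>j\<in>{1..K}. P h t j v * (1 - \<eta> * X h t j v))"
      unfolding Z_def
    proof (intro sum_mono)
      fix j assume j: "j \<in> {1..K}"
      show "P h t j v * (1 - \<eta> * X h t j v) \<le> P h t j v * exp (- \<eta> * X h t j v)"
        using exp_ge_add_one_self[of "- \<eta> * X h t j v"] P_nonneg[OF j] by (intro mult_left_mono) auto
    qed
    have Zb: "(\<Sum>j\<in>{1..K}. P h t j v * (1 - \<eta> * X h t j v)) = 1 - \<eta> * (\<Sum>j\<in>{1..K}. P h t j v * X h t j v)"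
      by (simp add: algebra_simps sum_subtractf sum_distrib_left P_sum)
    have "(\<Sum>j\<in>{1..K}. P h t j v * X h t j v) \<le> real K * exp 1"
      using sum_mono[of "{1..K}" "\<lambda>j. P h t j v * X h t j v" "\<lambda>_. exp 1"] px by simp
    then have "1 - \<eta> * (\<Sum>j\<in>{1..K}. P h t j v * X h t j v) \<ge> 1 - \<eta> * (real K * exp 1)"
      using eta_pos by (intro diff_left_mono mult_left_mono) auto
    with Za Zb have Z1: "Z h t v \<ge> 1 - \<eta> * (real K * exp 1)" by linarith
    have "\<eta> * (real K * exp 1) \<le> 1 / (real d + 1)"
      using eta_le by (simp add: field_simps)
    then have "Z h t v \<ge> 1 - 1 / (real d + 1)" using Z1 by linarith
    moreover have "1 - 1 / (real d + 1) = real d / (real d + 1)" by (simp add: field_simps)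
    ultimately have Z2: "Z h t v \<ge> real d / (real d + 1)" by simp
    have dpos: "real d > 0" using d by simp
    have "P h (Suc t) i v = P h t i v * exp (- \<eta> * X h t i v) / Z h t v" using True by (simp add: P_Suc)
    also have "\<dots> \<le> P h t i v / Z h t v"
      using X_nonneg[OF less.prems] eta_pos Pp Z_pos[of h t v]
      by (intro divide_right_mono) (auto simp: mult_le_cancel_left1)
    also have "\<dots> \<le> P h t i v / (real d / (real d + 1))"
      using Z2 Pp dpos Z_pos[of h t v] by (intro divide_left_mono) (auto intro!: divide_pos_pos mult_pos_pos)
    also have "\<dots> = (real d + 1) / real d * P h t i v" by simp
    finally show ?thesis .
  qed
qed

lemma P_ratio: assumes v: "v \<in> {1..N}" and i: "i \<in> {1..K}" and m: "m \<le> d"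
  shows "P h (u + m) i v \<le> exp 1 * P h u i v"
proof (cases "d = 0")
  case True
  have "P h u i v \<le> exp 1 * P h u i v" using mult_right_mono[of 1 "exp 1" "P h u i v"] P_pos[OF i, of h u v] by simp
  then show ?thesis using m True by simp
next
  case False
  define \<rho> where "\<rho> = (real d + 1) / real d"
  have rho1: "\<rho> \<ge> 1" using False by (simp add: \<rho>_def)
  have "P h (u + m) i v \<le> \<rho> ^ m * P h u i v"
    using P_step_upper[OF _ v] False rho1 i unfolding \<rho>_def by (intro chain) auto
  also have "\<dots> \<le> \<rho> ^ d * P h u i v"
    using rho1 m P_nonneg[OF i] by (intro mult_right_mono power_increasing) auto
  also have "\<dots> \<le> exp 1 * P h u i v"
    using rho_pow False P_nonneg[OF i] unfolding \<rho>_def by (intro mult_right_mono) auto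
  finally show ?thesis .
qed


lemma Z_upper: "Z h t v \<le> 1 - \<eta> * (\<Sum>j\<in>{1..K}. P h t j v * X h t j v) + \<eta>^2 / 2 * (\<Sum>j\<in>{1..K}. P h t j v * (X h t j v)^2)"
proof -
  have "Z h t v \<le> (\<Sum>j\<in>{1..K}. P h t j v * (1 - \<eta> * X h t j v + (\<eta> * X h t j v)^2 / 2))"
    unfolding Z_def
  proof (intro sum_mono)
    fix j assume j: "j \<in> {1..K}"
    have "exp (- (\<eta> * X h t j v)) \<le> 1 - \<eta> * X h t j v + (\<eta> * X h t j v)^2 / 2"
      using X_nonneg[OF j] eta_pos by (intro exp_quad) simp
    then show "P h t j v * exp (- \<eta> * X h t j v) \<le> P h t j v * (1 - \<eta> * X h t j v + (\<eta> * X h t j v)^2 / 2)"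
      using P_nonneg[OF j] by (intro mult_left_mono) auto
  qed
  also have "\<dots> = (\<Sum>j\<in>{1..K}. P h t j v) - \<eta> * (\<Sum>j\<in>{1..K}. P h t j v * X h t j v) + \<eta>^2 / 2 * (\<Sum>j\<in>{1..K}. P h t j v * (X h t j v)^2)"
    by (simp add: algebra_simps sum.distrib sum_subtractf sum_distrib_left power2_eq_square)
  finally show ?thesis using P_sum by simp
qed

lemma log_P: "ln (P h (Suc n) k v) = - ln (real K) + (\<Sum>t\<in>{1..n}. - \<eta> * X h t k v - ln (Z h t v))"
  if k: "k \<in> {1..K}"
proof (induction n)
  case 0 then show ?case using Kpos by (simp add: P_Suc P_0 ln_div)
next
  case (Suc n)
  have "ln (P h (Suc (Suc n)) k v) = ln (P h (Suc n) k v * exp (- \<eta> * X h (Suc n) k v) / Z h (Suc n) v)"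
    by (simp add: P_Suc)
  also have "\<dots> = ln (P h (Suc n) k v) + (- \<eta> * X h (Suc n) k v) - ln (Z h (Suc n) v)"
    using P_pos[OF k, of h "Suc n" v] Z_pos[of h "Suc n" v] by (simp add: ln_div ln_mult)
  finally show ?case using Suc by (simp add: atLeastAtMostSuc_conv)
qed

lemma exp3:
  assumes k: "k \<in> {1..K}"
  shows "\<eta> * (\<Sum>t\<in>{1..n}. \<Sum>j\<in>{1..K}. P h t j v * X h t j v)
    \<le> ln (real K) + \<eta> * (\<Sum>t\<in>{1..n}. X h t k v) + \<eta>^2 / 2 * (\<Sum>t\<in>{1..n}. \<Sum>j\<in>{1..K}. P h t j v * (X h t j v)^2)"
proof -
  have lnZ: "ln (Z h t v) \<le> - \<eta> * (\<Sum>j\<in>{1..K}. P h t j v * X h t j v) + \<eta>^2 / 2 * (\<Sum>j\<in>{1..K}. P h t j v * (X h t j v)^2)" for t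
    using ln_le_minus_one[OF Z_pos[of h t v]] Z_upper[of h t v] by linarith
  have "ln (P h (Suc n) k v) \<le> 0" using P_pos[OF k] P_le1[OF k] by simp
  then have "(\<Sum>t\<in>{1..n}. - \<eta> * X h t k v - ln (Z h t v)) \<le> ln (real K)"
    using log_P[OF k, of h n v] by simp
  moreover have "(\<Sum>t\<in>{1..n}. - \<eta> * X h t k v - ln (Z h t v)) \<ge>
     (\<Sum>t\<in>{1..n}. - \<eta> * X h t k v + \<eta> * (\<Sum>j\<in>{1..K}. P h t j v * X h t j v) - \<eta>^2 / 2 * (\<Sum>j\<in>{1..K}. P h t j v * (X h t j v)^2))"
  proof (intro sum_mono)
    fix t show "- \<eta> * X h t k v + \<eta> * (\<Sum>j\<in>{1..K}. P h t j v * X h t j v) - \<eta>^2 / 2 * (\<Sum>j\<in>{1..K}. P h t j v * (X h t j v)^2) \<le> - \<eta> * X h t k v - ln (Z h t v)"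
      using lnZ[of t] by linarith
  qed
  moreover have "(\<Sum>t\<in>{1..n}. - \<eta> * X h t k v + \<eta> * (\<Sum>j\<in>{1..K}. P h t j v * X h t j v) - \<eta>^2 / 2 * (\<Sum>j\<in>{1..K}. P h t j v * (X h t j v)^2))
     = - \<eta> * (\<Sum>t\<in>{1..n}. X h t k v) + \<eta> * (\<Sum>t\<in>{1..n}. \<Sum>j\<in>{1..K}. P h t j v * X h t j v) - \<eta>^2 / 2 * (\<Sum>t\<in>{1..n}. \<Sum>j\<in>{1..K}. P h t j v * (X h t j v)^2)"
    by (simp add: sum.distrib sum_subtractf sum_distrib_left sum_negf)
  ultimately show ?thesis by linarith
qed


lemma dep_fq: assumes "s \<le> Suc m" shows "dep m (\<lambda>h. \<phi> (q h s i v))"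
proof (rule depI)
  fix h h' :: "nat \<times> nat \<Rightarrow> nat" assume a: "\<And>x. fst x \<le> m \<Longrightarrow> h x = h' x"
  have "q h s i v = q h' s i v" by (rule depD[OF dep_q[OF assms] a])
  then show "\<phi> (q h s i v) = \<phi> (q h' s i v)" by simp
qed

lemma X_shift: "1 \<le> u \<Longrightarrow> X h (u + d) i v = L u i / q h u i v * Bf h u i v"
  unfolding X_def by simp

lemma EE_X:
  assumes u: "1 \<le> u" "u \<le> n" and v: "v \<in> {1..N}" and i: "i \<in> {1..K}" and c: "dep (u - 1) c"
  shows "EE n (\<lambda>h. c h * X h (u + d) i v) = EE n (\<lambda>h. c h * L u i)"
proof -
  have c': "dep (u - 1) (\<lambda>h. c h * (L u i / q h u i v))"
    using u by (intro dep_mult[OF c] dep_fq[where \<phi>="\<lambda>x. L u i / x"]) auto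
  have "EE n (\<lambda>h. c h * X h (u + d) i v) = EE n (\<lambda>h. (c h * (L u i / q h u i v)) * Bf h u i v)"
    using u by (simp add: X_shift mult_ac)
  also have "\<dots> = EE n (\<lambda>h. (c h * (L u i / q h u i v)) * q h u i v)"
    by (rule EE_Bf[OF u v i c'])
  also have "\<dots> = EE n (\<lambda>h. c h * L u i)"
  proof (rule EE_cong)
    fix h show "c h * (L u i / q h u i v) * q h u i v = c h * L u i" using q_pos[OF v i, of h u] by simp
  qed
  finally show ?thesis .
qed

lemma EE_X2:
  assumes u: "1 \<le> u" "u \<le> n" and v: "v \<in> {1..N}" and i: "i \<in> {1..K}" and c: "dep (u - 1) c"
  shows "EE n (\<lambda>h. c h * (X h (u + d) i v)^2) = EE n (\<lambda>h. c h * (L u i)^2 / q h u i v)"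
proof -
  have c': "dep (u - 1) (\<lambda>h. c h * ((L u i)^2 / (q h u i v)^2))"
    using u by (intro dep_mult[OF c] dep_fq[where \<phi>="\<lambda>x. (L u i)^2 / x^2"]) auto
  have "EE n (\<lambda>h. c h * (X h (u + d) i v)^2) = EE n (\<lambda>h. (c h * ((L u i)^2 / (q h u i v)^2)) * Bf h u i v)"
  proof (rule EE_cong)
    fix h
    have "(X h (u + d) i v)^2 = (L u i / q h u i v)^2 * (Bf h u i v * Bf h u i v)"
      using u by (simp add: X_shift power2_eq_square mult_ac)
    then show "c h * (X h (u + d) i v)^2 = (c h * ((L u i)^2 / (q h u i v)^2)) * Bf h u i v"
      using Bf_01(3)[of h u i v] by (simp add: power_divide)
  qed
  also have "\<dots> = EE n (\<lambda>h. (c h * ((L u i)^2 / (q h u i v)^2)) * q h u i v)"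
    by (rule EE_Bf[OF u v i c'])
  also have "\<dots> = EE n (\<lambda>h. c h * (L u i)^2 / q h u i v)"
  proof (rule EE_cong)
    fix h show "c h * ((L u i)^2 / (q h u i v)^2) * q h u i v = c h * (L u i)^2 / q h u i v"
      using q_pos[OF v i, of h u] by (simp add: power2_eq_square)
  qed
  finally show ?thesis .
qed


definition "Y h s i v = (\<Sum>r\<in>{s..<s+d}. X h r i v)"

lemma Y_nonneg: "i \<in> {1..K} \<Longrightarrow> Y h s i v \<ge> 0"
  unfolding Y_def by (intro sum_nonneg X_nonneg)

lemma dep_Y: assumes "1 \<le> s" shows "dep (s - 1) (\<lambda>h. Y h s i v)"
  unfolding Y_def using assms by (intro dep_sum dep_X) auto

lemma dep_Pu: "1 \<le> u \<Longrightarrow> dep (u - 1) (\<lambda>h. P h u i v)"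
  by (intro dep_P) simp

lemma EE_PL_le1: "EE n (\<lambda>h. \<Sum>i\<in>{1..K}. P h u i v * L u i) \<le> 1"
proof -
  have "EE n (\<lambda>h. \<Sum>i\<in>{1..K}. P h u i v * L u i) \<le> EE n (\<lambda>h. \<Sum>i\<in>{1..K}. P h u i v)"
    using Lb by (intro EE_mono sum_mono) (auto intro: mult_left_le)
  also have "\<dots> = 1" by (simp add: P_sum EE_const)
  finally show ?thesis .
qed

lemma I1:
  assumes s: "1 \<le> s" "s \<le> n" and v: "v \<in> {1..N}"
  shows "EE n (\<lambda>h. \<Sum>i\<in>{1..K}. P h s i v * L s i)
    \<le> EE n (\<lambda>h. \<Sum>i\<in>{1..K}. P h (s + d) i v * X h (s + d) i v) + \<eta> * EE n (\<lambda>h. \<Sum>i\<in>{1..K}. P h s i v * Y h s i v)"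
proof -
  have "EE n (\<lambda>h. \<Sum>i\<in>{1..K}. P h s i v * L s i) - \<eta> * EE n (\<lambda>h. \<Sum>i\<in>{1..K}. P h s i v * Y h s i v)
      = EE n (\<lambda>h. \<Sum>i\<in>{1..K}. P h s i v * L s i - \<eta> * (P h s i v * Y h s i v))"
    by (simp add: EE_diff[symmetric] EE_cmult[symmetric] sum_subtractf sum_distrib_left)
  also have "\<dots> \<le> EE n (\<lambda>h. \<Sum>i\<in>{1..K}. (P h s i v * (1 - \<eta> * Y h s i v)) * L s i)"
  proof (intro EE_mono sum_mono)
    fix h i assume i: "i \<in> {1..K}"
    have "\<eta> * (P h s i v * Y h s i v) * L s i \<le> \<eta> * (P h s i v * Y h s i v)"
      using Lb[OF i] eta_pos P_nonneg[OF i] Y_nonneg[OF i] by (intro mult_left_le) auto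
    then show "P h s i v * L s i - \<eta> * (P h s i v * Y h s i v) \<le> P h s i v * (1 - \<eta> * Y h s i v) * L s i"
      by (simp add: algebra_simps)
  qed
  also have "\<dots> = (\<Sum>i\<in>{1..K}. EE n (\<lambda>h. (P h s i v * (1 - \<eta> * Y h s i v)) * L s i))"
    by (rule EE_sum)
  also have "\<dots> = (\<Sum>i\<in>{1..K}. EE n (\<lambda>h. (P h s i v * (1 - \<eta> * Y h s i v)) * X h (s + d) i v))"
  proof (intro sum.cong refl)
    fix i assume i: "i \<in> {1..K}"
    have c: "dep (s - 1) (\<lambda>h. P h s i v * (1 - \<eta> * Y h s i v))"
      using s by (intro dep_mult dep_Pu dep_comp[where \<phi>="\<lambda>x. 1 - \<eta> * x"] dep_Y) auto
    show "EE n (\<lambda>h. P h s i v * (1 - \<eta> * Y h s i v) * L s i) = EE n (\<lambda>h. P h s i v * (1 - \<eta> * Y h s i v) * X h (s + d) i v)"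
      using EE_X[OF s v i c] by simp
  qed
  also have "\<dots> = EE n (\<lambda>h. \<Sum>i\<in>{1..K}. (P h s i v * (1 - \<eta> * Y h s i v)) * X h (s + d) i v)"
    by (rule EE_sum[symmetric])
  also have "\<dots> \<le> EE n (\<lambda>h. \<Sum>i\<in>{1..K}. P h (s + d) i v * X h (s + d) i v)"
  proof (intro EE_mono sum_mono)
    fix h i assume i: "i \<in> {1..K}"
    have "P h s i v * (1 - \<eta> * Y h s i v) \<le> P h (s + d) i v"
      using P_lower[OF i, of h s v d] unfolding Y_def by simp
    then show "P h s i v * (1 - \<eta> * Y h s i v) * X h (s + d) i v \<le> P h (s + d) i v * X h (s + d) i v"
      using X_nonneg[OF i] by (intro mult_right_mono) auto
  qed
  finally show ?thesis by linarith
qed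

lemma I2:
  assumes s: "1 \<le> s" "s \<le> n" and v: "v \<in> {1..N}"
  shows "EE n (\<lambda>h. \<Sum>i\<in>{1..K}. P h s i v * Y h s i v) \<le> real d * exp 1"
proof -
  have "EE n (\<lambda>h. \<Sum>i\<in>{1..K}. P h s i v * Y h s i v) = EE n (\<lambda>h. \<Sum>r\<in>{s..<s+d}. \<Sum>i\<in>{1..K}. P h s i v * X h r i v)"
    unfolding Y_def sum_distrib_left by (intro EE_cong) (rule sum.swap)
  also have "\<dots> = (\<Sum>r\<in>{s..<s+d}. EE n (\<lambda>h. \<Sum>i\<in>{1..K}. P h s i v * X h r i v))"
    by (rule EE_sum)
  also have "\<dots> \<le> (\<Sum>r\<in>{s..<s+d}. exp 1)"
  proof (intro sum_mono)
    fix r assume r: "r \<in> {s..<s+d}"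
    show "EE n (\<lambda>h. \<Sum>i\<in>{1..K}. P h s i v * X h r i v) \<le> exp 1"
    proof (cases "d < r")
      case False
      then show ?thesis by (simp add: X_zero EE_const)
    next
      case True
      define u where "u = r - d"
      have u: "1 \<le> u" "u \<le> n" "r = u + d" "s = u + (s - u)" "s - u \<le> d"
        using True r s unfolding u_def by auto
      have "EE n (\<lambda>h. \<Sum>i\<in>{1..K}. P h s i v * X h r i v) \<le> EE n (\<lambda>h. \<Sum>i\<in>{1..K}. exp 1 * (P h u i v * X h (u + d) i v))"
      proof (intro EE_mono sum_mono)
        fix h i assume i: "i \<in> {1..K}"
        have "P h s i v \<le> exp 1 * P h u i v" using P_ratio[OF v i u(5), of h u] u(4) by simp
        then show "P h s i v * X h r i v \<le> exp 1 * (P h u i v * X h (u + d) i v)"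
          using X_nonneg[OF i, of h r v] u(3) by (simp add: mult_right_mono mult.assoc[symmetric])
      qed
      also have "\<dots> = exp 1 * (\<Sum>i\<in>{1..K}. EE n (\<lambda>h. P h u i v * X h (u + d) i v))"
        by (simp add: sum_distrib_left[symmetric] EE_cmult EE_sum)
      also have "(\<Sum>i\<in>{1..K}. EE n (\<lambda>h. P h u i v * X h (u + d) i v)) = (\<Sum>i\<in>{1..K}. EE n (\<lambda>h. P h u i v * L u i))"
        using u by (intro sum.cong refl EE_X v dep_Pu) auto
      also have "\<dots> = EE n (\<lambda>h. \<Sum>i\<in>{1..K}. P h u i v * L u i)" by (rule EE_sum[symmetric])
      also have "exp 1 * \<dots> \<le> exp 1 * 1" using EE_PL_le1 by (intro mult_left_mono) auto
      finally show ?thesis by simp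
    qed
  qed
  also have "\<dots> = real d * exp 1" by simp
  finally show ?thesis .
qed

lemma I3:
  assumes s: "1 \<le> s" "s \<le> n" and v: "v \<in> {1..N}"
  shows "EE n (\<lambda>h. \<Sum>i\<in>{1..K}. P h (s + d) i v * (X h (s + d) i v)^2)
    \<le> exp 1 * EE n (\<lambda>h. \<Sum>i\<in>{1..K}. P h s i v / q h s i v)"
proof -
  have "EE n (\<lambda>h. \<Sum>i\<in>{1..K}. P h (s + d) i v * (X h (s + d) i v)^2)
     \<le> EE n (\<lambda>h. \<Sum>i\<in>{1..K}. (exp 1 * P h s i v) * (X h (s + d) i v)^2)"
  proof (intro EE_mono sum_mono mult_right_mono)
    fix h i assume i: "i \<in> {1..K}"
    show "P h (s + d) i v \<le> exp 1 * P h s i v" using P_ratio[OF v i order_refl] .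
  qed simp
  also have "\<dots> = (\<Sum>i\<in>{1..K}. EE n (\<lambda>h. (exp 1 * P h s i v) * (X h (s + d) i v)^2))" by (rule EE_sum)
  also have "\<dots> = (\<Sum>i\<in>{1..K}. EE n (\<lambda>h. (exp 1 * P h s i v) * (L s i)^2 / q h s i v))"
    using s by (intro sum.cong refl EE_X2 v dep_mult[OF dep_const] dep_Pu) auto
  also have "\<dots> = EE n (\<lambda>h. \<Sum>i\<in>{1..K}. (exp 1 * P h s i v) * (L s i)^2 / q h s i v)" by (rule EE_sum[symmetric])
  also have "\<dots> \<le> EE n (\<lambda>h. \<Sum>i\<in>{1..K}. exp 1 * (P h s i v / q h s i v))"
  proof (intro EE_mono sum_mono)
    fix h i assume i: "i \<in> {1..K}"
    have "(L s i)^2 \<le> 1" using Lb[OF i] by (simp add: power_le_one)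
    then have "exp 1 * P h s i v * (L s i)^2 \<le> exp 1 * P h s i v" using P_nonneg[OF i] by (simp add: mult_left_le)
    then show "exp 1 * P h s i v * (L s i)^2 / q h s i v \<le> exp 1 * (P h s i v / q h s i v)"
      using q_pos[OF v i, of h s] by (simp add: divide_right_mono)
  qed
  also have "\<dots> = EE n (\<lambda>h. exp 1 * (\<Sum>i\<in>{1..K}. P h s i v / q h s i v))"
    by (simp add: sum_distrib_left)
  also have "\<dots> = exp 1 * EE n (\<lambda>h. \<Sum>i\<in>{1..K}. P h s i v / q h s i v)"
    by (rule EE_cmult)
  finally show ?thesis .
qed

lemma I4:
  assumes s: "1 \<le> s" "s \<le> n" and v: "v \<in> {1..N}" and k: "k \<in> {1..K}"
  shows "EE n (\<lambda>h. X h (s + d) k v) = L s k"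
  using EE_X[OF s v k dep_const[of "s - 1" 1]] by (simp add: EE_const)


lemma sum_shift:
  assumes g: "\<And>t. t \<le> d \<Longrightarrow> g t = (0::real)"
  shows "(\<Sum>t\<in>{1..n}. g t) = (\<Sum>s\<in>{1..n-d}. g (s + d))"
proof -
  have "(\<Sum>s\<in>{1..n-d}. g (s + d)) = (\<Sum>t\<in>(\<lambda>s. s + d) ` {1..n-d}. g t)"
    by (subst sum.reindex) (auto simp: inj_on_def)
  also have "\<dots> = (\<Sum>t\<in>{1..n}. g t)"
  proof (rule sum.mono_neutral_left)
    show "(\<lambda>s. s + d) ` {1..n - d} \<subseteq> {1..n}" by auto
    show "\<forall>i\<in>{1..n} - (\<lambda>s. s + d) ` {1..n - d}. g i = 0"
    proof
      fix t assume t: "t \<in> {1..n} - (\<lambda>s. s + d) ` {1..n - d}"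
      have "t \<le> d"
      proof (rule ccontr)
        assume "\<not> t \<le> d"
        then have "t - d \<in> {1..n - d}" "t = (t - d) + d" using t by auto
        then show False using t by blast
      qed
      then show "g t = 0" by (rule g)
    qed
  qed simp
  finally show ?thesis by simp
qed

lemma per_v:
  assumes v: "v \<in> {1..N}" and k: "k \<in> {1..K}"
  shows "EE n (\<lambda>h. \<Sum>t\<in>{1..n}. L t (h (t, v)))
    \<le> real d + ln (real K) / \<eta> + (\<Sum>s\<in>{1..n}. L s k) + real n * \<eta> * real d * exp 1
       + \<eta> * exp 1 / 2 * (\<Sum>s\<in>{1..n-d}. EE n (\<lambda>h. \<Sum>i\<in>{1..K}. P h s i v / q h s i v))"
proof -
  define f where "f t = EE n (\<lambda>h. \<Sum>i\<in>{1..K}. P h t i v * L t i)" for t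
  define Q where "Q = (\<Sum>s\<in>{1..n-d}. EE n (\<lambda>h. \<Sum>i\<in>{1..K}. P h s i v / q h s i v))"
  define S1 where "S1 = EE n (\<lambda>h. \<Sum>t\<in>{1..n}. \<Sum>i\<in>{1..K}. P h t i v * X h t i v)"
  define Sk where "Sk = EE n (\<lambda>h. \<Sum>t\<in>{1..n}. X h t k v)"
  define S2 where "S2 = EE n (\<lambda>h. \<Sum>t\<in>{1..n}. \<Sum>i\<in>{1..K}. P h t i v * (X h t i v)^2)"
  have a1: "EE n (\<lambda>h. \<Sum>t\<in>{1..n}. L t (h (t, v))) = (\<Sum>t\<in>{1..n-d}. f t) + (\<Sum>t\<in>{n-d<..n}. f t)"
  proof -
    have "EE n (\<lambda>h. \<Sum>t\<in>{1..n}. L t (h (t, v))) = (\<Sum>t\<in>{1..n}. EE n (\<lambda>h. L t (h (t, v))))"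
      by (rule EE_sum)
    also have "\<dots> = (\<Sum>t\<in>{1..n}. f t)"
      unfolding f_def using v by (intro sum.cong refl EE_loss) (auto simp: mult.commute)
    also have "\<dots> = (\<Sum>t\<in>{1..n-d}. f t) + (\<Sum>t\<in>{n-d<..n}. f t)"
    proof -
      have e: "{1..n} = {1..n-d} \<union> {n-d<..n}" by auto
      have "(\<Sum>t\<in>{1..n-d} \<union> {n-d<..n}. f t) = (\<Sum>t\<in>{1..n-d}. f t) + (\<Sum>t\<in>{n-d<..n}. f t)"
        by (rule sum.union_disjoint) auto
      then show ?thesis using e by simp
    qed
    finally show ?thesis .
  qed
  have a2: "(\<Sum>t\<in>{n-d<..n}. f t) \<le> real d"
  proof -
    have "(\<Sum>t\<in>{n-d<..n}. f t) \<le> (\<Sum>t\<in>{n-d<..n}. 1)"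
      unfolding f_def by (intro sum_mono EE_PL_le1)
    also have "\<dots> \<le> real d" by simp
    finally show ?thesis .
  qed
  have a3: "(\<Sum>t\<in>{1..n-d}. f t) \<le> S1 + real (n - d) * \<eta> * real d * exp 1"
  proof -
    have "(\<Sum>t\<in>{1..n-d}. f t) \<le> (\<Sum>s\<in>{1..n-d}. EE n (\<lambda>h. \<Sum>i\<in>{1..K}. P h (s + d) i v * X h (s + d) i v) + \<eta> * (real d * exp 1))"
    proof (intro sum_mono)
      fix s assume s: "s \<in> {1..n-d}"
      then have s': "1 \<le> s" "s \<le> n" by auto
      show "f s \<le> EE n (\<lambda>h. \<Sum>i\<in>{1..K}. P h (s + d) i v * X h (s + d) i v) + \<eta> * (real d * exp 1)"
        unfolding f_def using I1[OF s' v] I2[OF s' v] eta_pos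
        by (smt (verit, best) mult_left_mono)
    qed
    also have "\<dots> = EE n (\<lambda>h. \<Sum>s\<in>{1..n-d}. \<Sum>i\<in>{1..K}. P h (s + d) i v * X h (s + d) i v) + real (n - d) * \<eta> * real d * exp 1"
      by (simp add: sum.distrib EE_sum)
    also have "EE n (\<lambda>h. \<Sum>s\<in>{1..n-d}. \<Sum>i\<in>{1..K}. P h (s + d) i v * X h (s + d) i v) = S1"
      unfolding S1_def by (intro EE_cong sum_shift[symmetric]) (simp add: X_zero)
    finally show ?thesis .
  qed
  have a4: "S1 \<le> ln (real K) / \<eta> + Sk + \<eta> / 2 * S2"
  proof -
    have "S1 \<le> EE n (\<lambda>h. ln (real K) / \<eta> + (\<Sum>t\<in>{1..n}. X h t k v) + \<eta> / 2 * (\<Sum>t\<in>{1..n}. \<Sum>i\<in>{1..K}. P h t i v * (X h t i v)^2))"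
      unfolding S1_def
    proof (rule EE_mono)
      fix h
      have "\<eta> * (\<Sum>t\<in>{1..n}. \<Sum>i\<in>{1..K}. P h t i v * X h t i v) \<le> \<eta> * (ln (real K) / \<eta> + (\<Sum>t\<in>{1..n}. X h t k v) + \<eta> / 2 * (\<Sum>t\<in>{1..n}. \<Sum>i\<in>{1..K}. P h t i v * (X h t i v)^2))"
        using exp3[OF k, where n=n and h=h and v=v] eta_pos by (simp add: algebra_simps power2_eq_square)
      then show "(\<Sum>t\<in>{1..n}. \<Sum>i\<in>{1..K}. P h t i v * X h t i v) \<le> ln (real K) / \<eta> + (\<Sum>t\<in>{1..n}. X h t k v) + \<eta> / 2 * (\<Sum>t\<in>{1..n}. \<Sum>i\<in>{1..K}. P h t i v * (X h t i v)^2)"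
        using eta_pos by simp
    qed
    also have "\<dots> = ln (real K) / \<eta> + Sk + \<eta> / 2 * S2"
      unfolding Sk_def S2_def by (simp only: EE_add EE_cmult EE_const)
    finally show ?thesis .
  qed
  have a5: "Sk \<le> (\<Sum>s\<in>{1..n}. L s k)"
  proof -
    have "Sk = EE n (\<lambda>h. \<Sum>s\<in>{1..n-d}. X h (s + d) k v)"
      unfolding Sk_def by (intro EE_cong sum_shift) (simp add: X_zero)
    also have "\<dots> = (\<Sum>s\<in>{1..n-d}. EE n (\<lambda>h. X h (s + d) k v))" by (rule EE_sum)
    also have "\<dots> = (\<Sum>s\<in>{1..n-d}. L s k)" using v k by (intro sum.cong refl I4) auto
    also have "\<dots> \<le> (\<Sum>s\<in>{1..n}. L s k)"
      using Lb[OF k] by (intro sum_mono2) auto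
    finally show ?thesis .
  qed
  have a6: "S2 \<le> exp 1 * Q"
  proof -
    have "S2 = EE n (\<lambda>h. \<Sum>s\<in>{1..n-d}. \<Sum>i\<in>{1..K}. P h (s + d) i v * (X h (s + d) i v)^2)"
      unfolding S2_def by (intro EE_cong sum_shift) (simp add: X_zero)
    also have "\<dots> = (\<Sum>s\<in>{1..n-d}. EE n (\<lambda>h. \<Sum>i\<in>{1..K}. P h (s + d) i v * (X h (s + d) i v)^2))" by (rule EE_sum)
    also have "\<dots> \<le> (\<Sum>s\<in>{1..n-d}. exp 1 * EE n (\<lambda>h. \<Sum>i\<in>{1..K}. P h s i v / q h s i v))"
      using v by (intro sum_mono I3) auto
    also have "\<dots> = exp 1 * Q" unfolding Q_def by (simp add: sum_distrib_left)
    finally show ?thesis .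
  qed
  have a7: "real (n - d) * \<eta> * real d * exp 1 \<le> real n * \<eta> * real d * exp 1"
    using eta_pos by (intro mult_right_mono) auto
  have a8: "\<eta> / 2 * S2 \<le> \<eta> / 2 * (exp 1 * Q)"
    using a6 eta_pos by (intro mult_left_mono) auto
  have "\<eta> / 2 * (exp 1 * Q) = \<eta> * exp 1 / 2 * Q" by simp
  then show ?thesis unfolding Q_def[symmetric] using a1 a2 a3 a4 a5 a7 a8 by linarith
qed



lemma pq_bound:
  assumes v: "v \<in> {1..N}" and i: "i \<in> {1..K}"
  shows "P h s i v / q h s i v \<le> (P h s i v / (\<Sum>u\<in>nbhd E N d v. P h s i u) + P h s i v) / (1 - exp (-1))"
proof -
  define p where "p = P h s i v"
  define PV where "PV = (\<Sum>u\<in>nbhd E N d v. P h s i u)"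
  define c where "c = 1 - exp (-1::real)"
  have c: "c > 0" unfolding c_def by simp
  have p: "p > 0" unfolding p_def using P_pos[OF i] .
  have pPV: "p \<le> PV" unfolding p_def PV_def using nbhd_self[OF v] finite_nbhd i
    by (intro member_le_sum) auto
  have "(\<Prod>u\<in>nbhd E N d v. (1 - P h s i u)) \<le> (\<Prod>u\<in>nbhd E N d v. exp (- P h s i u))"
  proof (intro prod_mono conjI)
    fix u assume "u \<in> nbhd E N d v"
    show "0 \<le> 1 - P h s i u" using P_le1[OF i] by simp
    show "1 - P h s i u \<le> exp (- P h s i u)" using exp_ge_add_one_self[of "- P h s i u"] by simp
  qed
  also have "\<dots> = exp (- PV)" unfolding PV_def using finite_nbhd by (simp add: exp_sum sum_negf[symmetric])
  finally have q1: "q h s i v \<ge> 1 - exp (- PV)" unfolding q_def by simp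
  have qp: "q h s i v > 0" using q_pos[OF v i] .
  have key: "p / q h s i v \<le> (p / PV) / c \<or> p / q h s i v \<le> p / c"
  proof (cases "PV \<ge> 1")
    case True
    then have "exp (- PV) \<le> exp (-1)" by simp
    then have "q h s i v \<ge> c" using q1 unfolding c_def by linarith
    then have "p / q h s i v \<le> p / c" using p c by (intro divide_left_mono) auto
    then show ?thesis by simp
  next
    case False
    have "exp (- PV) \<le> 1 - c * PV" unfolding c_def using pPV p False by (intro exp_chord) auto
    then have "q h s i v \<ge> c * PV" using q1 by simp
    then have "p / q h s i v \<le> p / (c * PV)" using p c pPV qp by (intro divide_left_mono) auto
    then show ?thesis by (simp add: mult.commute)
  qed
  have "p / PV \<ge> 0" using p pPV by simp
  then have "(p / PV) / c \<le> (p / PV + p) / c" "p / c \<le> (p / PV + p) / c"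
    using c p divide_right_mono[of "p / PV" "p / PV + p" c] divide_right_mono[of p "p / PV + p" c] by auto
  then show ?thesis using key unfolding p_def PV_def c_def by linarith
qed


lemma alpha_bound:
  assumes i: "i \<in> {1..K}"
  shows "(\<Sum>v\<in>{1..N}. P h s i v / (\<Sum>u\<in>nbhd E N d v. P h s i u)) \<le> real (alpha_pow E N d)"
proof -
  have ex: "\<exists>S\<subseteq>{1..N}. (\<forall>a\<in>S. \<forall>b\<in>S. a \<noteq> b \<longrightarrow> \<not> walk_le E d a b)
      \<and> (\<Sum>v\<in>{1..N}. P h s i v / (\<Sum>u\<in>{u\<in>{1..N}. walk_le E d v u}. P h s i u)) \<le> real (card S)"
  proof (rule greedy[where V="{1..N}"])
    show "\<And>a b. walk_le E d a b \<Longrightarrow> walk_le E d b a" by (rule walk_sym[OF Esym])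
    show "\<And>a. a \<in> {1..N} \<Longrightarrow> walk_le E d a a" by (rule walk_refl)
    show "\<And>a. a \<in> {1..N} \<Longrightarrow> 0 < P h s i a" by (rule P_pos[OF i])
  qed auto
  then obtain S where S: "S \<subseteq> {1..N}" "\<forall>a\<in>S. \<forall>b\<in>S. a \<noteq> b \<longrightarrow> \<not> walk_le E d a b"
    "(\<Sum>v\<in>{1..N}. P h s i v / (\<Sum>u\<in>{u\<in>{1..N}. walk_le E d v u}. P h s i u)) \<le> real (card S)"
    by blast
  have "indep_pow E N d S" using S unfolding indep_pow_def by blast
  moreover have "finite {S. indep_pow E N d S}"
    by (rule finite_subset[of _ "Pow {1..N}"]) (auto simp: indep_pow_def)
  ultimately have "card S \<le> alpha_pow E N d" unfolding alpha_pow_def by (auto intro!: Max_ge)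
  then show ?thesis using S(3) unfolding nbhd_def by simp
qed



lemma graph_sum:
  "(\<Sum>v\<in>{1..N}. \<Sum>i\<in>{1..K}. P h s i v / q h s i v) \<le> (real K * real (alpha_pow E N d) + real N) / (1 - exp (-1))"
proof -
  define g where "g i v = P h s i v / (\<Sum>u\<in>nbhd E N d v. P h s i u)" for i v
  have c: "1 - exp (-1::real) > 0" by simp
  have a: "(\<Sum>v\<in>{1..N}. \<Sum>i\<in>{1..K}. P h s i v / q h s i v)
     \<le> (\<Sum>v\<in>{1..N}. \<Sum>i\<in>{1..K}. (g i v + P h s i v) / (1 - exp (-1)))"
    unfolding g_def by (intro sum_mono pq_bound) auto
  have b: "(\<Sum>v\<in>{1..N}. \<Sum>i\<in>{1..K}. (g i v + P h s i v) / (1 - exp (-1)))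
      = ((\<Sum>v\<in>{1..N}. \<Sum>i\<in>{1..K}. g i v) + (\<Sum>v\<in>{1..N}. \<Sum>i\<in>{1..K}. P h s i v)) / (1 - exp (-1))"
    by (simp only: sum_divide_distrib[symmetric] sum.distrib)
  have c1: "(\<Sum>v\<in>{1..N}. \<Sum>i\<in>{1..K}. P h s i v) = real N" by (simp add: P_sum)
  have c2: "(\<Sum>v\<in>{1..N}. \<Sum>i\<in>{1..K}. g i v) = (\<Sum>i\<in>{1..K}. \<Sum>v\<in>{1..N}. g i v)" by (rule sum.swap)
  have c3: "(\<Sum>i\<in>{1..K}. \<Sum>v\<in>{1..N}. g i v) \<le> (\<Sum>i\<in>{1..K}. real (alpha_pow E N d))"
    unfolding g_def by (intro sum_mono alpha_bound)
  have "(\<Sum>v\<in>{1..N}. \<Sum>i\<in>{1..K}. g i v) + (\<Sum>v\<in>{1..N}. \<Sum>i\<in>{1..K}. P h s i v) \<le> real K * real (alpha_pow E N d) + real N"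
    using c1 c2 c3 by simp
  then have "((\<Sum>v\<in>{1..N}. \<Sum>i\<in>{1..K}. g i v) + (\<Sum>v\<in>{1..N}. \<Sum>i\<in>{1..K}. P h s i v)) / (1 - exp (-1))
     \<le> (real K * real (alpha_pow E N d) + real N) / (1 - exp (-1))"
    using c by (intro divide_right_mono) auto
  then show ?thesis using a b by linarith
qed


lemma exp_loss_EE: "coop_exp_loss E N K d \<eta> L n v = EE n (\<lambda>h. \<Sum>t\<in>{1..n}. L t (h (t, v)))"
  unfolding coop_exp_loss_def EE_def hist_def prob_def by simp

lemma regret_locale:
  assumes N: "N \<ge> 1"
  shows "coop_regret E N K d \<eta> L n \<le> real d + ln (real K) / \<eta> + real n * \<eta> * real d * exp 1
     + \<eta> * exp 1 / 2 * real n * ((real K * real (alpha_pow E N d) + real N) / (1 - exp (-1))) / real N"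
proof -
  define G where "G = (real K * real (alpha_pow E N d) + real N) / (1 - exp (-1))"
  have G0: "G \<ge> 0" unfolding G_def by (intro divide_nonneg_pos) auto
  obtain k where k: "k \<in> {1..K}" "(\<Sum>t\<in>{1..n}. L t k) = Min ((\<lambda>i. \<Sum>t = 1..n. L t i) ` {1..K})"
  proof -
    have "Min ((\<lambda>i. \<Sum>t = 1..n. L t i) ` {1..K}) \<in> (\<lambda>i. \<Sum>t = 1..n. L t i) ` {1..K}"
      using K2 by (intro Min_in) auto
    then show ?thesis using that by auto
  qed
  define C where "C = real d + ln (real K) / \<eta> + (\<Sum>s\<in>{1..n}. L s k) + real n * \<eta> * real d * exp 1"
  have sv: "(\<Sum>v\<in>{1..N}. coop_exp_loss E N K d \<eta> L n v)
     \<le> (\<Sum>v\<in>{1..N}. C + \<eta> * exp 1 / 2 * (\<Sum>s\<in>{1..n-d}. EE n (\<lambda>h. \<Sum>i\<in>{1..K}. P h s i v / q h s i v)))"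
    unfolding exp_loss_EE C_def by (intro sum_mono per_v k(1)) auto
  also have "\<dots> = real N * C + \<eta> * exp 1 / 2 * (\<Sum>s\<in>{1..n-d}. EE n (\<lambda>h. \<Sum>v\<in>{1..N}. \<Sum>i\<in>{1..K}. P h s i v / q h s i v))"
  proof -
    have "(\<Sum>v\<in>{1..N}. \<Sum>s\<in>{1..n-d}. EE n (\<lambda>h. \<Sum>i\<in>{1..K}. P h s i v / q h s i v))
        = (\<Sum>s\<in>{1..n-d}. \<Sum>v\<in>{1..N}. EE n (\<lambda>h. \<Sum>i\<in>{1..K}. P h s i v / q h s i v))" by (rule sum.swap)
    also have "\<dots> = (\<Sum>s\<in>{1..n-d}. EE n (\<lambda>h. \<Sum>v\<in>{1..N}. \<Sum>i\<in>{1..K}. P h s i v / q h s i v))"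
      by (intro sum.cong refl EE_sum[symmetric])
    moreover have "(\<Sum>v\<in>{1..N}. C + \<eta> * exp 1 / 2 * (\<Sum>s\<in>{1..n-d}. EE n (\<lambda>h. \<Sum>i\<in>{1..K}. P h s i v / q h s i v)))
       = real N * C + \<eta> * exp 1 / 2 * (\<Sum>v\<in>{1..N}. \<Sum>s\<in>{1..n-d}. EE n (\<lambda>h. \<Sum>i\<in>{1..K}. P h s i v / q h s i v))"
      by (simp only: sum.distrib sum_distrib_left[symmetric]) simp
    ultimately show ?thesis by simp
  qed
  also have "(\<Sum>s\<in>{1..n-d}. EE n (\<lambda>h. \<Sum>v\<in>{1..N}. \<Sum>i\<in>{1..K}. P h s i v / q h s i v)) \<le> (\<Sum>s\<in>{1..n-d}. G)"
  proof (intro sum_mono)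
    fix s
    have "EE n (\<lambda>h. \<Sum>v\<in>{1..N}. \<Sum>i\<in>{1..K}. P h s i v / q h s i v) \<le> EE n (\<lambda>_. G)"
      unfolding G_def by (intro EE_mono graph_sum)
    then show "EE n (\<lambda>h. \<Sum>v\<in>{1..N}. \<Sum>i\<in>{1..K}. P h s i v / q h s i v) \<le> G" by (simp add: EE_const)
  qed
  also have "(\<Sum>s\<in>{1..n-d}. G) \<le> real n * G" using G0 by (simp add: mult_right_mono)
  finally have tot: "(\<Sum>v\<in>{1..N}. coop_exp_loss E N K d \<eta> L n v) \<le> real N * C + \<eta> * exp 1 / 2 * (real n * G)"
    using eta_pos by (simp add: mult_left_mono)
  have Npos: "real N > 0" using N by simp
  have "(\<Sum>v\<in>{1..N}. coop_exp_loss E N K d \<eta> L n v) / real N \<le> (real N * C + \<eta> * exp 1 / 2 * (real n * G)) / real N"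
    using tot Npos by (intro divide_right_mono) auto
  also have "\<dots> = C + \<eta> * exp 1 / 2 * real n * G / real N" using Npos by (simp add: field_simps)
  finally show ?thesis unfolding coop_regret_def C_def G_def k(2)[symmetric] by simp
qed

end


lemma coop_p_congL:
  assumes LL: "\<And>s i. s \<in> {1..T} \<Longrightarrow> L s i = L' s i"
  shows "t \<le> Suc T \<Longrightarrow> coop_p E N K d \<eta> L h t = coop_p E N K d \<eta> L' h t"
proof (induction t rule: less_induct)
  case (less t)
  show ?case
  proof (cases t)
    case 0 then show ?thesis by simp
  next
    case (Suc t0)
    have 1: "coop_p E N K d \<eta> L h t0 = coop_p E N K d \<eta> L' h t0" using less Suc by auto
    have 2: "coop_p E N K d \<eta> L h (t0 - d) = coop_p E N K d \<eta> L' h (t0 - d)" using less Suc by auto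
    show ?thesis
    proof (cases "d < t0")
      case True
      have 3: "L (t0 - d) = L' (t0 - d)" using LL less.prems Suc True by (intro ext LL) auto
      show ?thesis unfolding Suc coop_p.simps(2) Let_def 1 2 3 ..
    next
      case False
      show ?thesis unfolding Suc coop_p.simps(2) Let_def 1 2 using False by simp
    qed
  qed
qed

lemma regret_congL:
  assumes LL: "\<And>s i. s \<in> {1..T} \<Longrightarrow> L s i = L' s i"
  shows "coop_regret E N K d \<eta> L T = coop_regret E N K d \<eta> L' T"
proof -
  have p: "\<And>h s. s \<in> {1..T} \<Longrightarrow> coop_p E N K d \<eta> L h s = coop_p E N K d \<eta> L' h s"
    using coop_p_congL[OF LL] by auto
  have pr: "coop_prob E N K d \<eta> L T h = coop_prob E N K d \<eta> L' T h" for h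
    unfolding coop_prob_def using p by (intro prod.cong refl) auto
  have el: "coop_exp_loss E N K d \<eta> L T v = coop_exp_loss E N K d \<eta> L' T v" for v
    unfolding coop_exp_loss_def pr using LL by (intro sum.cong refl arg_cong2[where f="(*)"] refl) auto
  have m: "(\<lambda>i. \<Sum>t=1..T. L t i) = (\<lambda>i. \<Sum>t=1..T. L' t i)" using LL by (intro ext sum.cong) auto
  show ?thesis unfolding coop_regret_def el m ..
qed

lemma final_arith:
  fixes g lnK a n K d T e :: real
  assumes e: "2 \<le> e" "e \<le> 3" and g: "g > 0" and K: "K \<ge> 2" and n: "n \<ge> 1" and d: "d \<ge> 0" and T: "T \<ge> 0"
    and lnK: "lnK \<ge> 0" and a: "a \<ge> 0"
  shows "d + lnK / (g / (K * e * (d + 1))) + T * (g / (K * e * (d + 1))) * d * e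
     + (g / (K * e * (d + 1))) * e / 2 * T * ((K * a + n) / (1 - 1 / e)) / n
   \<le> 2 * d + K * e * (d + 1) * lnK / g + g * (a / (2 * (1 - 1 / e) * (d + 1) * n) + 3 / (K * e)) * T"
proof -
  define \<eta> where "\<eta> = g / (K * e * (d + 1))"
  define c where "c = 1 - 1 / e"
  have ep: "e > 0" using e by simp
  have cp: "c > 0" unfolding c_def using e by (simp add: field_simps)
  have etap: "\<eta> > 0" unfolding \<eta>_def using g K ep d by (intro divide_pos_pos mult_pos_pos) auto
  have t1: "lnK / \<eta> = K * e * (d + 1) * lnK / g" unfolding \<eta>_def using g K ep d by (simp add: field_simps)
  have D: "K * e * (d + 1) \<noteq> 0" using K ep d by auto
  have "\<eta> * (K * e * (d + 1)) = g" unfolding \<eta>_def using D by simp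
  then have gdef: "g = \<eta> * K * e * (d + 1)" by (simp add: mult.assoc)
  have nz: "K \<noteq> 0" "e \<noteq> 0" "d + 1 \<noteq> 0" "n \<noteq> 0" "c \<noteq> 0" using K ep d n cp by auto
  have t2: "\<eta> * e / 2 * T * ((K * a + n) / c) / n = g * (a / (2 * c * (d + 1) * n)) * T + T * (\<eta> * e / (2 * c))"
  proof -
    have aux: "\<And>D1. D1 \<noteq> 0 \<Longrightarrow> \<eta> * e / 2 * T * ((K * a + n) / c) / n = (\<eta> * K * e * D1) * (a / (2 * c * D1 * n)) * T + T * (\<eta> * e / (2 * c))"
      using nz by (simp add: field_simps)
    show ?thesis using aux[OF nz(3)] gdef by simp
  qed
  have ec: "e / (2 * c) \<le> 3"
  proof -
    have "(e - 2) * (e - 3) \<le> 0" using e by (intro mult_nonneg_nonpos) auto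
    then have "e * e \<le> 6 * e - 6" using ep by (simp add: algebra_simps)
    then have "e \<le> 6 * c" unfolding c_def using ep by (simp add: field_simps)
    then show ?thesis using cp by (simp add: field_simps)
  qed
  have t3: "\<eta> * d * e + \<eta> * e / (2 * c) \<le> g * (3 / (K * e))"
  proof -
    have "\<eta> * d * e \<le> \<eta> * d * 3" using etap d e by (intro mult_left_mono) auto
    moreover have "\<eta> * (e / (2 * c)) \<le> \<eta> * 3" using etap ec by (intro mult_left_mono) auto
    moreover have "\<eta> * d * 3 + \<eta> * 3 = g * (3 / (K * e))" unfolding gdef using nz by (simp add: field_simps)
    ultimately show ?thesis by simp
  qed
  have t4: "T * \<eta> * d * e + T * (\<eta> * e / (2 * c)) \<le> g * (3 / (K * e)) * T"
    using mult_left_mono[OF t3 T] by (simp add: algebra_simps)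
  have "d + lnK / \<eta> + T * \<eta> * d * e + \<eta> * e / 2 * T * ((K * a + n) / c) / n
      \<le> 2 * d + K * e * (d + 1) * lnK / g + g * (a / (2 * c * (d + 1) * n) + 3 / (K * e)) * T"
    using t1 t2 t4 d by (simp add: algebra_simps)
  then show ?thesis unfolding \<eta>_def c_def .
qed


theorem theorem1:
  fixes E :: "nat \<Rightarrow> nat \<Rightarrow> bool" and N K d T :: nat and \<gamma> :: real
    and L :: "nat \<Rightarrow> nat \<Rightarrow> real"
  assumes "\<And>u v. E u v \<Longrightarrow> u \<in> {1..N} \<and> v \<in> {1..N}"
    and "\<And>u v. E u v \<Longrightarrow> E v u"
    and "\<And>u. \<not> E u u"
    and "connected_graph E N"
    and "K \<ge> 2"
    and "0 < \<gamma>" and "\<gamma> \<le> 1"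
    and "T \<ge> 1"
    and "\<And>t i. t \<in> {1..T} \<Longrightarrow> i \<in> {1..K} \<Longrightarrow> 0 \<le> L t i \<and> L t i \<le> 1"
  shows "coop_regret E N K d (\<gamma> / (real K * exp 1 * (real d + 1))) L T
    \<le> 2 * real d + real K * exp 1 * (real d + 1) * ln (real K) / \<gamma>
       + \<gamma> * (real (alpha_pow E N d) / (2 * (1 - exp (-1)) * (real d + 1) * real N)
               + 3 / (real K * exp 1)) * real T"
proof -
  define \<eta> where "\<eta> = \<gamma> / (real K * exp 1 * (real d + 1))"
  have K2: "real K \<ge> 2" using assms(5) by simp
  have lnK: "ln (real K) \<ge> 0" using K2 by simp
  have e2: "2 \<le> exp (1::real)" using exp_ge_add_one_self[of "1::real"] by simp
  have e3: "exp (1::real) \<le> 3" by (rule exp_le)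
  have em: "exp (-1::real) = 1 / exp 1" by (simp add: exp_minus inverse_eq_divide)
  have RHS0: "0 \<le> 2 * real d + real K * exp 1 * (real d + 1) * ln (real K) / \<gamma>"
    using assms(6) lnK by (intro add_nonneg_nonneg divide_nonneg_pos mult_nonneg_nonneg) auto
  show ?thesis
  proof (cases "N = 0")
    case True
    have "0 \<le> Min ((\<lambda>i. \<Sum>t = 1..T. L t i) ` {1..K})"
      using assms(5) assms(9) by (subst Min_ge_iff) (auto intro!: sum_nonneg)
    then have "coop_regret E N K d (\<gamma> / (real K * exp 1 * (real d + 1))) L T \<le> 0"
      unfolding coop_regret_def using True by simp
    moreover have "0 \<le> \<gamma> * (real (alpha_pow E N d) / (2 * (1 - exp (-1)) * (real d + 1) * real N)
               + 3 / (real K * exp 1)) * real T"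
      using True assms(6) K2 by simp
    ultimately show ?thesis using RHS0 by linarith
  next
    case False
    define L' where "L' t i = (if t \<in> {1..T} then L t i else 0)" for t i
    have etapos: "\<eta> > 0" unfolding \<eta>_def using assms(6) K2 by (intro divide_pos_pos mult_pos_pos) auto
    have etale: "\<eta> * real K * exp 1 * (real d + 1) \<le> 1"
    proof -
      have D: "real K * exp 1 * (real d + 1) \<noteq> 0" using K2 by auto
      have "\<eta> * (real K * exp 1 * (real d + 1)) = \<gamma>" unfolding \<eta>_def using D by simp
      then have "\<eta> * real K * exp 1 * (real d + 1) = \<gamma>" by (simp add: mult.assoc)
      then show ?thesis using assms(7) by simp
    qed
    interpret coop E N K d \<eta> L'
    proof
      show "2 \<le> K" by (rule assms(5))
      show "0 < \<eta>" by (rule etapos)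
      show "\<eta> * real K * exp 1 * (real d + 1) \<le> 1" by (rule etale)
      show "\<And>t i. i \<in> {1..K} \<Longrightarrow> 0 \<le> L' t i \<and> L' t i \<le> 1" using assms(9) by (auto simp: L'_def)
      show "\<And>u v. E u v \<Longrightarrow> E v u" by (rule assms(2))
    qed
    have "coop_regret E N K d \<eta> L T = coop_regret E N K d \<eta> L' T"
      by (rule regret_congL) (simp add: L'_def)
    also have "\<dots> \<le> real d + ln (real K) / \<eta> + real T * \<eta> * real d * exp 1
     + \<eta> * exp 1 / 2 * real T * ((real K * real (alpha_pow E N d) + real N) / (1 - exp (-1))) / real N"
      using False by (intro regret_locale) auto
    also have "\<dots> \<le> 2 * real d + real K * exp 1 * (real d + 1) * ln (real K) / \<gamma>
       + \<gamma> * (real (alpha_pow E N d) / (2 * (1 - exp (-1)) * (real d + 1) * real N)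
               + 3 / (real K * exp 1)) * real T"
    proof -
      have fa: "real d + ln (real K) / (\<gamma> / (real K * exp 1 * (real d + 1))) + real T * (\<gamma> / (real K * exp 1 * (real d + 1))) * real d * exp 1
     + (\<gamma> / (real K * exp 1 * (real d + 1))) * exp 1 / 2 * real T * ((real K * real (alpha_pow E N d) + real N) / (1 - 1 / exp 1)) / real N
   \<le> 2 * real d + real K * exp 1 * (real d + 1) * ln (real K) / \<gamma> + \<gamma> * (real (alpha_pow E N d) / (2 * (1 - 1 / exp 1) * (real d + 1) * real N) + 3 / (real K * exp 1)) * real T"
        by (rule final_arith) (use e2 e3 assms(6) K2 False lnK in auto)
      then show ?thesis unfolding em \<eta>_def .
    qed
    finally show ?thesis unfolding \<eta>_def .
  qed
qed

end
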